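(* Let $P$ be a join-semilattice with $\dim_\vee(P)=n<\infty$. The following are equivalent: (i) $P$ admits a one-to-one join-preserving map into a product of $n$ order-scattered chains; (ii) $P$ admits a one-to-one join-preserving map into a product of finitely many order-scattered chains; (iii) $\mathrm{Id}(P)$ is topologically scattered; (iv) $\mathrm{Id}(P)$ is order-scattered; (v) $\mathrm{mi}_\Delta(\mathrm{Id}(P))$ is order-scattered; (vi) the topological closure $\overline{\mathrm{mi}_\Delta(\mathrm{Id}(P))}$ is topologically scattered.
   Context: $\dim_\vee(P)$ is the least cardinal $\kappa$ such that $P$ admits a one-to-one join-preserving map into a product of $\kappa$ chains. $\mathrm{Id}(P)$ is the lattice of ideals (non-empty up-directed initial segments) of $P$ ordered by inclusion, viewed as a subspace of $\mathbf{2}^P\cong\mathcal{P}(P)$ with the product topology; closures are taken in this space. $\mathrm{mi}_\Delta(L)$ is the set of completely meet-irreducible elements of a complete lattice $L$ (elements $m$ having an upper cover $m^*$ with $z>m\Rightarrow z\geq m^*$). A poset is order-scattered if it contains no copy of $\mathbb{Q}$; a space is topologically scattered if every non-empty subset has an isolated point. *)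

theory Defs
  imports "HOL-Analysis.Analysis"
begin

definition is_chain :: "'c set \<Rightarrow> ('c \<Rightarrow> 'c \<Rightarrow> bool) \<Rightarrow> bool" where
  "is_chain C le \<longleftrightarrow>
     (\<forall>x\<in>C. le x x) \<and>
     (\<forall>x\<in>C. \<forall>y\<in>C. le x y \<and> le y x \<longrightarrow> x = y) \<and>
     (\<forall>x\<in>C. \<forall>y\<in>C. \<forall>z\<in>C. le x y \<and> le y z \<longrightarrow> le x z) \<and>
     (\<forall>x\<in>C. \<forall>y\<in>C. le x y \<or> le y x)"

definition order_scattered :: "'c set \<Rightarrow> ('c \<Rightarrow> 'c \<Rightarrow> bool) \<Rightarrow> bool" where
  "order_scattered X le \<longleftrightarrow>
     \<not> (\<exists>g :: rat \<Rightarrow> 'c. range g \<subseteq> X \<and> (\<forall>p q. p \<le> q \<longleftrightarrow> le (g p) (g q)))"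

text \<open>f is a one-to-one join-preserving map from the join-semilattice 'a into the
  product of the chains (C i, le i), i < n. The join in a chain is the maximum.\<close>
definition join_embedding ::
  "nat \<Rightarrow> (nat \<Rightarrow> 'c set) \<Rightarrow> (nat \<Rightarrow> 'c \<Rightarrow> 'c \<Rightarrow> bool) \<Rightarrow> ('a::semilattice_sup \<Rightarrow> nat \<Rightarrow> 'c) \<Rightarrow> bool" where
  "join_embedding n C le f \<longleftrightarrow>
     (\<forall>i<n. is_chain (C i) (le i)) \<and>
     (\<forall>x. \<forall>i<n. f x i \<in> C i) \<and>
     (\<forall>x y. \<forall>i<n. f (sup x y) i = (if le i (f x i) (f y i) then f y i else f x i)) \<and>
     (\<forall>x y. (\<forall>i<n. f x i = f y i) \<longrightarrow> x = y)"

text \<open>Chains are taken with carriers in the type 'a of P: this is no loss,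
  since the image of P in each chain is a subchain of cardinality at most |P|.\<close>
definition embeds_in_chains :: "'a::semilattice_sup itself \<Rightarrow> nat \<Rightarrow> bool" where
  "embeds_in_chains _ n \<longleftrightarrow>
     (\<exists>(C :: nat \<Rightarrow> 'a set) le (f :: 'a \<Rightarrow> nat \<Rightarrow> 'a). join_embedding n C le f)"

definition embeds_in_scattered_chains :: "'a::semilattice_sup itself \<Rightarrow> nat \<Rightarrow> bool" where
  "embeds_in_scattered_chains _ n \<longleftrightarrow>
     (\<exists>(C :: nat \<Rightarrow> 'a set) le (f :: 'a \<Rightarrow> nat \<Rightarrow> 'a). join_embedding n C le f \<and>
        (\<forall>i<n. order_scattered (C i) (le i)))"

definition join_dim_eq :: "'a::semilattice_sup itself \<Rightarrow> nat \<Rightarrow> bool" where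
  "join_dim_eq T n \<longleftrightarrow> embeds_in_chains T n \<and> (\<forall>m<n. \<not> embeds_in_chains T m)"

definition Id :: "'a::semilattice_sup set set" where
  "Id = {I. I \<noteq> {} \<and> (\<forall>x\<in>I. \<forall>y. y \<le> x \<longrightarrow> y \<in> I) \<and>
            (\<forall>x\<in>I. \<forall>y\<in>I. \<exists>z\<in>I. x \<le> z \<and> y \<le> z)}"

definition mi_Delta :: "'b set set \<Rightarrow> 'b set set" where
  "mi_Delta L = {m\<in>L. \<exists>m'\<in>L. m \<subset> m' \<and> (\<forall>z\<in>L. m \<subset> z \<longrightarrow> m' \<subseteq> z)}"

text \<open>The space 2^P with the product topology; subsets correspond to characteristic functions.\<close>
definition cantor_top :: "('b \<Rightarrow> bool) topology" where
  "cantor_top = product_topology (\<lambda>_. discrete_topology UNIV) UNIV"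

definition chi :: "'b set \<Rightarrow> 'b \<Rightarrow> bool" where
  "chi S = (\<lambda>x. x \<in> S)"

definition top_scattered :: "'t topology \<Rightarrow> 't set \<Rightarrow> bool" where
  "top_scattered T A \<longleftrightarrow>
     (\<forall>S\<subseteq>A. S \<noteq> {} \<longrightarrow> (\<exists>x\<in>S. \<exists>U. openin T U \<and> U \<inter> S = {x}))"

end

theory Submission
  imports Defs
begin


definition nbhd :: "'b set \<Rightarrow> 'b set \<Rightarrow> ('b \<Rightarrow> bool) set" where
  "nbhd F G = {h. (\<forall>x\<in>F. h x) \<and> (\<forall>x\<in>G. \<not> h x)}"

lemma topspace_cantor[simp]: "topspace cantor_top = UNIV"
  by (simp add: cantor_top_def)

lemma openin_nbhd:
  assumes "finite F" "finite G" shows "openin cantor_top (nbhd F G)"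
  unfolding cantor_top_def openin_product_topology_alt
proof (intro ballI)
  fix h assume h: "h \<in> nbhd F G"
  define U where "U i = (if i \<in> F \<union> G then {h i} else UNIV)" for i
  have "{i \<in> UNIV. U i \<noteq> topspace (discrete_topology UNIV)} \<subseteq> F \<union> G"
    by (auto simp: U_def)
  then have "finite {i \<in> UNIV. U i \<noteq> topspace (discrete_topology UNIV)}"
    using assms finite_subset by blast
  moreover have "h \<in> Pi\<^sub>E UNIV U" by (auto simp: U_def)
  moreover have "Pi\<^sub>E UNIV U \<subseteq> nbhd F G"
    using h by (auto simp: U_def nbhd_def PiE_def Pi_def)
  ultimately show "\<exists>U. finite {i \<in> UNIV. U i \<noteq> topspace (discrete_topology UNIV)} \<and>
          (\<forall>i\<in>UNIV. openin (discrete_topology UNIV) (U i)) \<and> h \<in> Pi\<^sub>E UNIV U \<and> Pi\<^sub>E UNIV U \<subseteq> nbhd F G"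
    by auto
qed

lemma openin_nbhd_sub:
  assumes "openin cantor_top U" "h \<in> U"
  shows "\<exists>F G. finite F \<and> finite G \<and> h \<in> nbhd F G \<and> nbhd F G \<subseteq> U"
proof -
  obtain V where V: "finite {i \<in> UNIV. V i \<noteq> topspace (discrete_topology (UNIV::bool set))}"
     "h \<in> Pi\<^sub>E UNIV V" "Pi\<^sub>E UNIV V \<subseteq> U"
    using assms unfolding cantor_top_def openin_product_topology_alt by blast
  define J where "J = {i. V i \<noteq> UNIV}"
  have fJ: "finite J" using V(1) by (simp add: J_def)
  define F where "F = {i\<in>J. h i}"
  define G where "G = {i\<in>J. \<not> h i}"
  have "nbhd F G \<subseteq> U"
  proof
    fix k assume k: "k \<in> nbhd F G"
    have "k \<in> Pi\<^sub>E UNIV V"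
    proof -
      have "k i \<in> V i" for i
      proof (cases "i \<in> J")
        case True
        then have "k i = h i" using k by (cases "h i") (auto simp: nbhd_def F_def G_def)
        then show ?thesis using V(2) by auto
      next
        case False then show ?thesis by (auto simp: J_def)
      qed
      then show ?thesis by (auto simp: PiE_def Pi_def)
    qed
    then show "k \<in> U" using V(3) by blast
  qed
  moreover have "h \<in> nbhd F G" by (auto simp: nbhd_def F_def G_def)
  moreover have "finite F" "finite G" using fJ by (auto simp: F_def G_def)
  ultimately show ?thesis by blast
qed

lemma chi_in_nbhd: "chi A \<in> nbhd F G \<longleftrightarrow> F \<subseteq> A \<and> G \<inter> A = {}"
  by (auto simp: chi_def nbhd_def)

lemma chi_inj: "chi A = chi B \<longleftrightarrow> A = B"
  unfolding chi_def by (auto simp: fun_eq_iff)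

lemma chi_surj: "h = chi {x. h x}"
  by (simp add: chi_def)

definition clo :: "'b set set \<Rightarrow> 'b set set" where
  "clo X = {A. chi A \<in> cantor_top closure_of (chi ` X)}"

lemma in_clo: "A \<in> clo X \<longleftrightarrow> (\<forall>F G. finite F \<longrightarrow> finite G \<longrightarrow> F \<subseteq> A \<longrightarrow> G \<inter> A = {}
      \<longrightarrow> (\<exists>B\<in>X. F \<subseteq> B \<and> G \<inter> B = {}))"
proof
  assume A: "A \<in> clo X"
  show "\<forall>F G. finite F \<longrightarrow> finite G \<longrightarrow> F \<subseteq> A \<longrightarrow> G \<inter> A = {} \<longrightarrow> (\<exists>B\<in>X. F \<subseteq> B \<and> G \<inter> B = {})"
  proof (intro allI impI)
    fix F G assume "finite F" "finite G" "F \<subseteq> A" "G \<inter> A = {}"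
    then have "chi A \<in> nbhd F G" "openin cantor_top (nbhd F G)" by (auto simp: chi_in_nbhd openin_nbhd)
    then obtain y where "y \<in> chi ` X" "y \<in> nbhd F G" using A unfolding clo_def in_closure_of by blast
    then obtain B where "B \<in> X" "chi B \<in> nbhd F G" by blast
    then show "\<exists>B\<in>X. F \<subseteq> B \<and> G \<inter> B = {}" unfolding chi_in_nbhd by blast
  qed
next
  assume H: "\<forall>F G. finite F \<longrightarrow> finite G \<longrightarrow> F \<subseteq> A \<longrightarrow> G \<inter> A = {} \<longrightarrow> (\<exists>B\<in>X. F \<subseteq> B \<and> G \<inter> B = {})"
  show "A \<in> clo X"
    unfolding clo_def in_closure_of
  proof (intro CollectI conjI allI impI)
    fix T assume T: "chi A \<in> T \<and> openin cantor_top T"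
    then obtain F G where FG: "finite F" "finite G" "chi A \<in> nbhd F G" "nbhd F G \<subseteq> T"
      using openin_nbhd_sub by metis
    then obtain B where "B \<in> X" "F \<subseteq> B" "G \<inter> B = {}" using H[rule_format, OF FG(1) FG(2)] FG(3) unfolding chi_in_nbhd by blast
    then have "chi B \<in> T" using FG(4) chi_in_nbhd by blast
    then show "\<exists>y. y \<in> chi ` X \<and> y \<in> T" using \<open>B \<in> X\<close> by blast
  qed simp
qed

lemma subset_clo: "X \<subseteq> clo X"
proof
  fix A assume "A \<in> X" then show "A \<in> clo X" unfolding in_clo by blast
qed

lemma closure_chi: "cantor_top closure_of (chi ` X) = chi ` clo X"
proof
  show "cantor_top closure_of (chi ` X) \<subseteq> chi ` clo X"
  proof
    fix h assume h: "h \<in> cantor_top closure_of (chi ` X)"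
    have e: "chi {x. h x} = h" using chi_surj[of h] by simp
    then have "{x. h x} \<in> clo X" using h unfolding clo_def by simp
    then show "h \<in> chi ` clo X" using e by (metis imageI)
  qed
  show "chi ` clo X \<subseteq> cantor_top closure_of (chi ` X)"
    unfolding clo_def by blast
qed

definition chainS :: "'b set set \<Rightarrow> bool" where
  "chainS X \<longleftrightarrow> (\<forall>A\<in>X. \<forall>B\<in>X. A \<subseteq> B \<or> B \<subseteq> A)"

lemma chain_finite_upper:
  assumes "chainS E" "E \<noteq> {}" "finite F" "F \<subseteq> \<Union>E"
  shows "\<exists>B\<in>E. F \<subseteq> B"
  using assms(3,4)
proof (induction F rule: finite_induct)
  case empty then show ?case using assms(2) by blast
next
  case (insert x F)
  then have "F \<subseteq> \<Union>E" by simp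
  then obtain B where B: "B \<in> E" "F \<subseteq> B" using insert.IH by blast
  obtain B' where B': "B' \<in> E" "x \<in> B'" using insert.prems by blast
  from assms(1) B(1) B'(1) have "B \<subseteq> B' \<or> B' \<subseteq> B" unfolding chainS_def by blast
  then show ?case using B B' by blast
qed

lemma chain_finite_lower:
  assumes "chainS E" "E \<noteq> {}" "finite G" "G \<inter> \<Inter>E = {}"
  shows "\<exists>B\<in>E. G \<inter> B = {}"
  using assms(3,4)
proof (induction G rule: finite_induct)
  case empty then show ?case using assms(2) by blast
next
  case (insert x G)
  then have "G \<inter> \<Inter>E = {}" by auto
  then obtain B where B: "B \<in> E" "G \<inter> B = {}" using insert.IH by blast
  obtain B' where B': "B' \<in> E" "x \<notin> B'" using insert.prems by blast
  from assms(1) B(1) B'(1) have "B \<subseteq> B' \<or> B' \<subseteq> B" unfolding chainS_def by blast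
  then show ?case using B B' by blast
qed

lemma Union_in_clo:
  assumes "chainS E" "E \<noteq> {}" "E \<subseteq> X" shows "\<Union>E \<in> clo X"
  unfolding in_clo
proof (intro allI impI)
  fix F G assume "finite F" "finite G" "F \<subseteq> \<Union>E" "G \<inter> \<Union>E = {}"
  then obtain B where "B \<in> E" "F \<subseteq> B" using chain_finite_upper[OF assms(1,2), of F] by blast
  then show "\<exists>B\<in>X. F \<subseteq> B \<and> G \<inter> B = {}" using \<open>G \<inter> \<Union>E = {}\<close> assms(3) by blast
qed

lemma Inter_in_clo:
  assumes "chainS E" "E \<noteq> {}" "E \<subseteq> X" shows "\<Inter>E \<in> clo X"
  unfolding in_clo
proof (intro allI impI)
  fix F G assume "finite F" "finite G" "F \<subseteq> \<Inter>E" "G \<inter> \<Inter>E = {}"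
  then obtain B where "B \<in> E" "G \<inter> B = {}" using chain_finite_lower[OF assms(1,2), of G] by blast
  then show "\<exists>B\<in>X. F \<subseteq> B \<and> G \<inter> B = {}" using \<open>F \<subseteq> \<Inter>E\<close> assms(3) by blast
qed

lemma chain_clo:
  assumes "chainS X" shows "chainS (clo X)"
  unfolding chainS_def
proof (intro ballI, rule ccontr)
  fix A B assume A: "A \<in> clo X" and B: "B \<in> clo X" and n: "\<not> (A \<subseteq> B \<or> B \<subseteq> A)"
  then obtain x y where xy: "x \<in> A" "x \<notin> B" "y \<in> B" "y \<notin> A" by blast
  have "\<exists>A'\<in>X. {x} \<subseteq> A' \<and> {y} \<inter> A' = {}"
    using A[unfolded in_clo, rule_format, of "{x}" "{y}"] xy by auto
  then obtain A' where A': "A' \<in> X" "x \<in> A'" "y \<notin> A'" by blast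
  have "\<exists>B'\<in>X. {y} \<subseteq> B' \<and> {x} \<inter> B' = {}"
    using B[unfolded in_clo, rule_format, of "{y}" "{x}"] xy by auto
  then obtain B' where B': "B' \<in> X" "y \<in> B'" "x \<notin> B'" by blast
  show False using assms A' B' unfolding chainS_def by blast
qed



definition pickf :: "'c set \<Rightarrow> ('c \<Rightarrow> 'c \<Rightarrow> bool) \<Rightarrow> (nat \<Rightarrow> nat \<Rightarrow> bool) \<Rightarrow> nat \<Rightarrow> 'c list \<Rightarrow> 'c" where
  "pickf S lt ld k xs = (SOME s. s \<in> S \<and> (\<forall>j<k. ld j k \<longrightarrow> lt (xs!j) s) \<and> (\<forall>j<k. ld k j \<longrightarrow> lt s (xs!j)))"

primrec build :: "'c set \<Rightarrow> ('c \<Rightarrow> 'c \<Rightarrow> bool) \<Rightarrow> (nat \<Rightarrow> nat \<Rightarrow> bool) \<Rightarrow> nat \<Rightarrow> 'c list" where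
  "build S lt ld 0 = []"
| "build S lt ld (Suc k) = build S lt ld k @ [pickf S lt ld k (build S lt ld k)]"

lemma length_build[simp]: "length (build S lt ld k) = k"
  by (induction k) auto

lemma build_prefix: "j < k \<Longrightarrow> build S lt ld k ! j = build S lt ld (Suc j) ! j"
proof (induction k)
  case 0 then show ?case by simp
next
  case (Suc k)
  show ?case
  proof (cases "j < k")
    case True
    then have "build S lt ld (Suc k) ! j = build S lt ld k ! j" by (simp add: nth_append)
    then show ?thesis using Suc True by simp
  next
    case False
    then have "j = k" using Suc by simp
    then show ?thesis by simp
  qed
qed

locale forth_setting =
  fixes S :: "'c set" and lt :: "'c \<Rightarrow> 'c \<Rightarrow> bool" and ld :: "nat \<Rightarrow> nat \<Rightarrow> bool"
  assumes ld_irr: "\<And>i. \<not> ld i i"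
    and ld_trans: "\<And>i j k. ld i j \<Longrightarrow> ld j k \<Longrightarrow> ld i k"
    and ld_tot: "\<And>i j. i \<noteq> j \<Longrightarrow> ld i j \<or> ld j i"
    and ne: "S \<noteq> {}"
    and lt_trans: "\<And>x y z. x \<in> S \<Longrightarrow> y \<in> S \<Longrightarrow> z \<in> S \<Longrightarrow> lt x y \<Longrightarrow> lt y z \<Longrightarrow> lt x z"
    and dense: "\<And>x y. x \<in> S \<Longrightarrow> y \<in> S \<Longrightarrow> lt x y \<Longrightarrow> \<exists>z\<in>S. lt x z \<and> lt z y"
    and nomax: "\<And>x. x \<in> S \<Longrightarrow> \<exists>y\<in>S. lt x y"
    and nomin: "\<And>x. x \<in> S \<Longrightarrow> \<exists>y\<in>S. lt y x"
begin

lemma ld_max: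
  assumes "finite A" "A \<noteq> {}" shows "\<exists>a\<in>A. \<forall>j\<in>A. j = a \<or> ld j a"
  using assms
proof (induction A rule: finite_ne_induct)
  case (singleton x) then show ?case by simp
next
  case (insert x A)
  then obtain a where a: "a \<in> A" "\<forall>j\<in>A. j = a \<or> ld j a" by blast
  have "x \<noteq> a" using insert.hyps a(1) by blast
  then consider "ld a x" | "ld x a" using ld_tot by blast
  then show ?case
  proof cases
    case 1
    have "\<forall>j\<in>insert x A. j = x \<or> ld j x"
    proof
      fix j assume "j \<in> insert x A"
      then consider "j = x" | "j = a" | "ld j a" using a(2) by blast
      then show "j = x \<or> ld j x" using 1 ld_trans by cases blast+
    qed
    then show ?thesis by blast
  next
    case 2
    have "\<forall>j\<in>insert x A. j = a \<or> ld j a"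
      using a(2) 2 by blast
    then show ?thesis using a(1) by blast
  qed
qed

lemma ld_min:
  assumes "finite A" "A \<noteq> {}" shows "\<exists>a\<in>A. \<forall>j\<in>A. j = a \<or> ld a j"
  using assms
proof (induction A rule: finite_ne_induct)
  case (singleton x) then show ?case by simp
next
  case (insert x A)
  then obtain a where a: "a \<in> A" "\<forall>j\<in>A. j = a \<or> ld a j" by blast
  have "x \<noteq> a" using insert.hyps a(1) by blast
  then consider "ld x a" | "ld a x" using ld_tot by blast
  then show ?case
  proof cases
    case 1
    have "\<forall>j\<in>insert x A. j = x \<or> ld x j"
    proof
      fix j assume "j \<in> insert x A"
      then consider "j = x" | "j = a" | "ld a j" using a(2) by blast
      then show "j = x \<or> ld x j" using 1 ld_trans by cases blast+
    qed
    then show ?thesis by blast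
  next
    case 2
    have "\<forall>j\<in>insert x A. j = a \<or> ld a j"
      using a(2) 2 by blast
    then show ?thesis using a(1) by blast
  qed
qed

lemma forth_step:
  assumes xsS: "\<forall>j<k. xs!j \<in> S"
    and xsmono: "\<forall>i<k. \<forall>j<k. ld i j \<longrightarrow> lt (xs!i) (xs!j)"
  shows "\<exists>s. s \<in> S \<and> (\<forall>j<k. ld j k \<longrightarrow> lt (xs!j) s) \<and> (\<forall>j<k. ld k j \<longrightarrow> lt s (xs!j))"
proof -
  define Lw where "Lw = {j. j < k \<and> ld j k}"
  define Up where "Up = {j. j < k \<and> ld k j}"
  have fin: "finite Lw" "finite Up" by (auto simp: Lw_def Up_def)
  show ?thesis
  proof (cases "Lw = {}")
    case True
    note LwE = True
    show ?thesis
    proof (cases "Up = {}")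
      case True
      obtain s where "s \<in> S" using ne by blast
      then show ?thesis using LwE True by (auto simp: Lw_def Up_def)
    next
      case False
      obtain b where b: "b \<in> Up" "\<forall>j\<in>Up. j = b \<or> ld b j" using ld_min[OF fin(2) False] by blast
      have bS: "xs!b \<in> S" using b(1) xsS by (auto simp: Up_def)
      obtain s where s: "s \<in> S" "lt s (xs!b)" using nomin[OF bS] by blast
      have "\<forall>j<k. ld k j \<longrightarrow> lt s (xs!j)"
      proof (intro allI impI)
        fix j assume j: "j < k" "ld k j"
        then have "j \<in> Up" by (simp add: Up_def)
        then have "j = b \<or> ld b j" using b(2) by blast
        then show "lt s (xs!j)"
        proof
          assume "ld b j"
          then have "lt (xs!b) (xs!j)" using xsmono b(1) j by (auto simp: Up_def)
          then show ?thesis using lt_trans[OF s(1) bS] s(2) xsS j(1) by blast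
        qed (use s in simp)
      qed
      then show ?thesis using s(1) LwE by (auto simp: Lw_def)
    qed
  next
    case False
    note LwN = False
    obtain a where a: "a \<in> Lw" "\<forall>j\<in>Lw. j = a \<or> ld j a" using ld_max[OF fin(1) False] by blast
    have aS: "xs!a \<in> S" using a(1) xsS by (auto simp: Lw_def)
    have lowok: "\<forall>j<k. ld j k \<longrightarrow> lt (xs!j) s" if s: "s \<in> S" "lt (xs!a) s" for s
    proof (intro allI impI)
      fix j assume j: "j < k" "ld j k"
      then have "j \<in> Lw" by (simp add: Lw_def)
      then have "j = a \<or> ld j a" using a(2) by blast
      then show "lt (xs!j) s"
      proof
        assume "ld j a"
        then have "lt (xs!j) (xs!a)" using xsmono a(1) j by (auto simp: Lw_def)
        then show ?thesis using lt_trans[OF _ aS s(1)] s(2) xsS j(1) by blast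
      qed (use s in simp)
    qed
    show ?thesis
    proof (cases "Up = {}")
      case True
      obtain s where s: "s \<in> S" "lt (xs!a) s" using nomax[OF aS] by blast
      then show ?thesis using lowok[OF s] True by (auto simp: Up_def)
    next
      case False
      obtain b where b: "b \<in> Up" "\<forall>j\<in>Up. j = b \<or> ld b j" using ld_min[OF fin(2) False] by blast
      have bS: "xs!b \<in> S" using b(1) xsS by (auto simp: Up_def)
      have "ld a b" using a(1) b(1) ld_trans by (auto simp: Lw_def Up_def)
      then have "lt (xs!a) (xs!b)" using xsmono a(1) b(1) by (auto simp: Lw_def Up_def)
      then obtain s where s: "s \<in> S" "lt (xs!a) s" "lt s (xs!b)" using dense[OF aS bS] by blast
      have "\<forall>j<k. ld k j \<longrightarrow> lt s (xs!j)"
      proof (intro allI impI)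
        fix j assume j: "j < k" "ld k j"
        then have "j \<in> Up" by (simp add: Up_def)
        then have "j = b \<or> ld b j" using b(2) by blast
        then show "lt s (xs!j)"
        proof
          assume "ld b j"
          then have "lt (xs!b) (xs!j)" using xsmono b(1) j by (auto simp: Up_def)
          then show ?thesis using lt_trans[OF s(1) bS] s(3) xsS j(1) by blast
        qed (use s in simp)
      qed
      then show ?thesis using lowok[OF s(1,2)] s(1) by blast
    qed
  qed
qed

lemma build_inv:
  "(\<forall>j<k. build S lt ld k ! j \<in> S) \<and> (\<forall>i<k. \<forall>j<k. ld i j \<longrightarrow> lt (build S lt ld k ! i) (build S lt ld k ! j))"
proof (induction k)
  case 0 then show ?case by simp
next
  case (Suc k)
  define xs where "xs = build S lt ld k"
  have lx: "length xs = k" by (simp add: xs_def)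
  define s where "s = pickf S lt ld k xs"
  have "\<exists>s. s \<in> S \<and> (\<forall>j<k. ld j k \<longrightarrow> lt (xs!j) s) \<and> (\<forall>j<k. ld k j \<longrightarrow> lt s (xs!j))"
    using forth_step Suc.IH unfolding xs_def by blast
  then have "s \<in> S \<and> (\<forall>j<k. ld j k \<longrightarrow> lt (xs!j) s) \<and> (\<forall>j<k. ld k j \<longrightarrow> lt s (xs!j))"
    unfolding s_def pickf_def by (rule someI_ex)
  then have s: "s \<in> S" "\<forall>j<k. ld j k \<longrightarrow> lt (xs!j) s" "\<forall>j<k. ld k j \<longrightarrow> lt s (xs!j)"
    by blast+
  have b: "build S lt ld (Suc k) = xs @ [s]" by (simp add: xs_def s_def)
  have nth: "(xs @ [s]) ! j = (if j < k then xs ! j else s)" if "j < Suc k" for j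
    using that lx by (auto simp: nth_append)
  have IH: "\<forall>j<k. xs ! j \<in> S" "\<forall>i<k. \<forall>j<k. ld i j \<longrightarrow> lt (xs ! i) (xs ! j)"
    using Suc.IH unfolding xs_def by blast+
  have A: "\<forall>j<Suc k. (xs @ [s]) ! j \<in> S"
    using nth IH(1) s(1) by auto
  have B: "\<forall>i<Suc k. \<forall>j<Suc k. ld i j \<longrightarrow> lt ((xs @ [s]) ! i) ((xs @ [s]) ! j)"
  proof (intro allI impI)
    fix i j assume ij: "i < Suc k" "j < Suc k" "ld i j"
    show "lt ((xs @ [s]) ! i) ((xs @ [s]) ! j)"
    proof (cases "i < k")
      case True
      show ?thesis
      proof (cases "j < k")
        case True
        then show ?thesis using \<open>i < k\<close> nth ij IH(2) by auto
      next
        case False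
        then have "j = k" using ij by simp
        then show ?thesis using \<open>i < k\<close> nth ij s(2) by auto
      qed
    next
      case False
      then have ik: "i = k" using ij by simp
      show ?thesis
      proof (cases "j < k")
        case True
        then show ?thesis using ik nth ij s(3) by auto
      next
        case False
        then have "j = k" using ij by simp
        then have False using ik ij(3) ld_irr by simp
        then show ?thesis ..
      qed
    qed
  qed
  show ?case unfolding b using A B by blast
qed

theorem embed: "\<exists>g. (\<forall>k. g k \<in> S) \<and> (\<forall>i j. ld i j \<longrightarrow> lt (g i) (g j))"
proof -
  define g where "g k = build S lt ld (Suc k) ! k" for k
  have gk: "g i = build S lt ld N ! i" if "i < N" for i N
    using build_prefix[OF that, of S lt ld] by (simp add: g_def)
  have "g k \<in> S" for k using build_inv[of "Suc k"] by (simp add: g_def)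
  moreover have "lt (g i) (g j)" if "ld i j" for i j
  proof -
    define N where "N = Suc (max i j)"
    have "i < N" "j < N" by (auto simp: N_def)
    then show ?thesis using build_inv[of N] gk that by simp
  qed
  ultimately show ?thesis by blast
qed

end

lemma countable_into_dense:
  fixes ldd :: "'d \<Rightarrow> 'd \<Rightarrow> bool" and e :: "'d \<Rightarrow> nat"
  assumes bij: "bij e"
    and irr: "\<And>x. \<not> ldd x x" and tr: "\<And>x y z. ldd x y \<Longrightarrow> ldd y z \<Longrightarrow> ldd x z"
    and tot: "\<And>x y. x \<noteq> y \<Longrightarrow> ldd x y \<or> ldd y x"
    and ne: "S \<noteq> {}"
    and lt_trans: "\<And>x y z. x \<in> S \<Longrightarrow> y \<in> S \<Longrightarrow> z \<in> S \<Longrightarrow> lt x y \<Longrightarrow> lt y z \<Longrightarrow> lt x z"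
    and dense: "\<And>x y. x \<in> S \<Longrightarrow> y \<in> S \<Longrightarrow> lt x y \<Longrightarrow> \<exists>z\<in>S. lt x z \<and> lt z y"
    and nomax: "\<And>x. x \<in> S \<Longrightarrow> \<exists>y\<in>S. lt x y"
    and nomin: "\<And>x. x \<in> S \<Longrightarrow> \<exists>y\<in>S. lt y x"
  shows "\<exists>g::'d \<Rightarrow> 'c. (\<forall>x. g x \<in> S) \<and> (\<forall>x y. ldd x y \<longrightarrow> lt (g x) (g y))"
proof -
  define ld where "ld i j = ldd (inv e i) (inv e j)" for i j
  have ie: "inv e (e x) = x" for x using bij by (simp add: bij_is_inj)
  have inj_ie: "inv e i = inv e j \<Longrightarrow> i = j" for i j
    using bij by (metis bij_inv_eq_iff)
  interpret forth_setting S lt ld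
  proof
    show "\<not> ld i i" for i using irr by (simp add: ld_def)
    show "ld i j \<Longrightarrow> ld j k \<Longrightarrow> ld i k" for i j k using tr by (simp add: ld_def)
    show "i \<noteq> j \<Longrightarrow> ld i j \<or> ld j i" for i j using tot inj_ie by (simp add: ld_def) blast
  qed (use ne lt_trans dense nomax nomin in blast)+
  obtain g where g: "\<forall>k. g k \<in> S" "\<forall>i j. ld i j \<longrightarrow> lt (g i) (g j)" using embed by blast
  show ?thesis
    by (rule exI[of _ "\<lambda>x. g (e x)"]) (use g ie in \<open>auto simp: ld_def\<close>)
qed

lemma rat_into_dense:
  assumes ne: "S \<noteq> {}"
    and lt_trans: "\<And>x y z. x \<in> S \<Longrightarrow> y \<in> S \<Longrightarrow> z \<in> S \<Longrightarrow> lt x y \<Longrightarrow> lt y z \<Longrightarrow> lt x z"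
    and dense: "\<And>x y. x \<in> S \<Longrightarrow> y \<in> S \<Longrightarrow> lt x y \<Longrightarrow> \<exists>z\<in>S. lt x z \<and> lt z y"
    and nomax: "\<And>x. x \<in> S \<Longrightarrow> \<exists>y\<in>S. lt x y"
    and nomin: "\<And>x. x \<in> S \<Longrightarrow> \<exists>y\<in>S. lt y x"
  shows "\<exists>g::rat \<Rightarrow> 'c. (\<forall>x. g x \<in> S) \<and> (\<forall>x y. x < y \<longrightarrow> lt (g x) (g y))"
proof -
  have "countable (UNIV :: rat set)" by simp
  moreover have "infinite (UNIV :: rat set)" by (simp add: infinite_UNIV_char_0)
  ultimately obtain e :: "rat \<Rightarrow> nat" where "bij_betw e UNIV UNIV" using countableE_infinite by blast
  then have "bij e" by simp
  show ?thesis
  proof (rule countable_into_dense[OF \<open>bij e\<close>, of "(<)"])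
    show "\<not> x < x" for x::rat by simp
    show "x < y \<Longrightarrow> y < z \<Longrightarrow> x < z" for x y z::rat by simp
    show "x \<noteq> y \<Longrightarrow> x < y \<or> y < x" for x y::rat by auto
  qed (fact ne, fact lt_trans, fact dense, fact nomax, fact nomin)
qed

definition lexb :: "rat \<times> bool \<Rightarrow> rat \<times> bool \<Rightarrow> bool" where
  "lexb a b \<longleftrightarrow> fst a < fst b \<or> (fst a = fst b \<and> \<not> snd a \<and> snd b)"

lemma gap_embedding:
  "\<exists>lo hi :: rat \<Rightarrow> rat. (\<forall>q. lo q < hi q) \<and> (\<forall>p q. p < q \<longrightarrow> hi p < lo q)"
proof -
  have "countable (UNIV :: (rat \<times> bool) set)" by simp
  moreover have "infinite (UNIV :: (rat \<times> bool) set)" by (simp add: infinite_UNIV_char_0 finite_prod)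
  ultimately obtain e :: "rat \<times> bool \<Rightarrow> nat" where "bij_betw e UNIV UNIV" using countableE_infinite by blast
  then have "bij e" by simp
  have "\<exists>g::rat \<times> bool \<Rightarrow> rat. (\<forall>x. g x \<in> UNIV) \<and> (\<forall>x y. lexb x y \<longrightarrow> g x < g y)"
  proof (rule countable_into_dense[OF \<open>bij e\<close>, of lexb UNIV "(<)"])
    show "\<not> lexb x x" for x by (auto simp: lexb_def)
    show "lexb x y \<Longrightarrow> lexb y z \<Longrightarrow> lexb x z" for x y z by (auto simp: lexb_def)
    show "x \<noteq> y \<Longrightarrow> lexb x y \<or> lexb y x" for x y by (cases x; cases y) (auto simp: lexb_def)
    show "\<exists>z\<in>UNIV. x < z \<and> z < y" if "x < y" for x y :: rat using that dense by blast
    show "\<exists>y\<in>UNIV. x < y" for x :: rat by (rule bexI[of _ "x+1"]) auto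
    show "\<exists>y\<in>UNIV. y < x" for x :: rat by (rule bexI[of _ "x-1"]) auto
    show "UNIV \<noteq> {}" by simp
    show "x < y \<Longrightarrow> y < z \<Longrightarrow> x < z" for x y z :: rat by simp
  qed
  then obtain g :: "rat \<times> bool \<Rightarrow> rat" where g: "\<forall>x y. lexb x y \<longrightarrow> g x < g y" by blast
  show ?thesis
    by (rule exI[of _ "\<lambda>q. g (q, False)"], rule exI[of _ "\<lambda>q. g (q, True)"]) (use g in \<open>auto simp: lexb_def\<close>)
qed



lemma os_strict_iff:
  "order_scattered X (\<subseteq>) \<longleftrightarrow> \<not> (\<exists>g::rat \<Rightarrow> 'b set. range g \<subseteq> X \<and> (\<forall>p q. p < q \<longrightarrow> g p \<subset> g q))"
proof
  assume os: "order_scattered X (\<subseteq>)"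
  show "\<not> (\<exists>g::rat \<Rightarrow> 'b set. range g \<subseteq> X \<and> (\<forall>p q. p < q \<longrightarrow> g p \<subset> g q))"
  proof
    assume "\<exists>g::rat \<Rightarrow> 'b set. range g \<subseteq> X \<and> (\<forall>p q. p < q \<longrightarrow> g p \<subset> g q)"
    then obtain g :: "rat \<Rightarrow> 'b set" where g: "range g \<subseteq> X" "\<forall>p q. p < q \<longrightarrow> g p \<subset> g q" by blast
    have "p \<le> q \<longleftrightarrow> g p \<subseteq> g q" for p q
    proof
      assume pq: "p \<le> q"
      show "g p \<subseteq> g q"
      proof (cases "p = q")
        case False then have "p < q" using pq by simp
        then show ?thesis using g(2) by blast
      qed simp
    next
      assume a: "g p \<subseteq> g q"
      show "p \<le> q"
      proof (rule ccontr)
        assume "\<not> p \<le> q" then have "q < p" by simp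
        then have "g q \<subset> g p" using g(2) by blast
        then show False using a by blast
      qed
    qed
    then show False using os g(1) unfolding order_scattered_def by blast
  qed
next
  assume ns: "\<not> (\<exists>g::rat \<Rightarrow> 'b set. range g \<subseteq> X \<and> (\<forall>p q. p < q \<longrightarrow> g p \<subset> g q))"
  show "order_scattered X (\<subseteq>)"
    unfolding order_scattered_def
  proof
    assume "\<exists>g::rat \<Rightarrow> 'b set. range g \<subseteq> X \<and> (\<forall>p q. (p \<le> q) = (g p \<subseteq> g q))"
    then obtain g :: "rat \<Rightarrow> 'b set" where g: "range g \<subseteq> X" "\<forall>p q. (p \<le> q) = (g p \<subseteq> g q)" by blast
    have "p < q \<longrightarrow> g p \<subset> g q" for p q
    proof
      assume "p < q"
      then have "p \<le> q" "\<not> q \<le> p" by auto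
      then have "g p \<subseteq> g q" "\<not> g q \<subseteq> g p" using g(2) by blast+
      then show "g p \<subset> g q" by blast
    qed
    then show False using ns g(1) by blast
  qed
qed

lemma os_subset: "order_scattered Y le \<Longrightarrow> X \<subseteq> Y \<Longrightarrow> order_scattered X le"
  unfolding order_scattered_def by blast

definition eneg :: "rat \<Rightarrow> rat" where
  "eneg q = (if q \<le> 0 then q - 1 else - 1 / (q + 1))"

lemma eneg_neg: "eneg q < 0"
  by (auto simp: eneg_def)

lemma eneg_mono: "p < q \<Longrightarrow> eneg p < eneg q"
proof -
  assume pq: "p < q"
  consider "q \<le> 0" | "p \<le> 0" "0 < q" | "0 < p" by linarith
  then show ?thesis
  proof cases
    case 1 then show ?thesis using pq by (auto simp: eneg_def)
  next
    case 2
    have a: "-1 < - 1 / (q + 1)" using 2 by (simp add: field_simps)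
    have c: "eneg p = p - 1" "eneg q = - 1 / (q + 1)" using 2 by (auto simp: eneg_def)
    show ?thesis using a c 2 by linarith
  next
    case 3
    have a: "1 / (q + 1) < 1 / (p + 1)" using 3 pq by (simp add: field_simps)
    have c: "eneg p = - 1 / (p + 1)" "eneg q = - 1 / (q + 1)" using 3 pq by (auto simp: eneg_def)
    show ?thesis using a unfolding c by simp
  qed
qed

lemma os_insert:
  assumes "order_scattered X (\<subseteq>)" shows "order_scattered (insert a X) (\<subseteq>)"
  unfolding os_strict_iff
proof
  assume "\<exists>g::rat \<Rightarrow> _ set. range g \<subseteq> insert a X \<and> (\<forall>p q. p < q \<longrightarrow> g p \<subset> g q)"
  then obtain g :: "rat \<Rightarrow> _ set" where g: "range g \<subseteq> insert a X" "\<forall>p q. p < q \<longrightarrow> g p \<subset> g q" by blast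
  have ginj: "g p = g q \<Longrightarrow> p = q" for p q
    using g(2) by (metis less_irrefl linorder_neqE psubset_eq)
  define q0 where "q0 = (if \<exists>q. g q = a then SOME q. g q = a else 0)"
  have q0: "g q = a \<Longrightarrow> g q0 = a" for q
    unfolding q0_def by (metis (mono_tags, lifting) someI_ex)
  define g' where "g' q = g (q0 + eneg q)" for q
  have "range g' \<subseteq> X"
  proof
    fix y assume "y \<in> range g'"
    then obtain q where y: "y = g (q0 + eneg q)" by (auto simp: g'_def)
    have "y \<noteq> a"
    proof
      assume "y = a"
      then have "g q0 = a" using q0 y by blast
      then have "q0 + eneg q = q0" using ginj y \<open>y = a\<close> by metis
      then show False using eneg_neg[of q] by simp
    qed
    then show "y \<in> X" using g(1) y by blast
  qed
  moreover have "\<forall>p q. p < q \<longrightarrow> g' p \<subset> g' q"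
    using g(2) eneg_mono by (simp add: g'_def)
  ultimately show False using assms unfolding os_strict_iff by blast
qed

lemma clo_between:
  assumes ch: "chainS X" and A: "A \<in> clo X" and A': "A' \<in> clo X" and A'': "A'' \<in> clo X"
    and s1: "A \<subset> A'" and s2: "A' \<subset> A''"
  shows "\<exists>B\<in>X. A \<subset> B \<and> B \<subset> A''"
proof -
  obtain x where x: "x \<in> A'" "x \<notin> A" using s1 by blast
  obtain y where y: "y \<in> A''" "y \<notin> A'" using s2 by blast
  have "\<exists>B\<in>X. {x} \<subseteq> B \<and> {y} \<inter> B = {}"
    using A'[unfolded in_clo, rule_format, of "{x}" "{y}"] x y by auto
  then obtain B where B: "B \<in> X" "x \<in> B" "y \<notin> B" by blast
  have chc: "chainS (clo X)" using chain_clo[OF ch] .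
  have Bc: "B \<in> clo X" using B(1) subset_clo by blast
  have "A \<subseteq> B \<or> B \<subseteq> A" using chc A Bc unfolding chainS_def by blast
  then have 1: "A \<subset> B" using B(2) x by blast
  have "A'' \<subseteq> B \<or> B \<subseteq> A''" using chc A'' Bc unfolding chainS_def by blast
  then have 2: "B \<subset> A''" using B(3) y by blast
  show ?thesis using 1 2 B(1) by blast
qed

lemma os_clo:
  assumes ch: "chainS X" and os: "order_scattered X (\<subseteq>)"
  shows "order_scattered (clo X) (\<subseteq>)"
  unfolding os_strict_iff
proof
  assume "\<exists>g::rat \<Rightarrow> _ set. range g \<subseteq> clo X \<and> (\<forall>p q. p < q \<longrightarrow> g p \<subset> g q)"
  then obtain g :: "rat \<Rightarrow> _ set" where g: "range g \<subseteq> clo X" "\<forall>p q. p < q \<longrightarrow> g p \<subset> g q" by blast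
  obtain lo hi :: "rat \<Rightarrow> rat" where lh: "\<forall>q. lo q < hi q" "\<forall>p q. p < q \<longrightarrow> hi p < lo q"
    using gap_embedding by blast
  have ex: "\<exists>B\<in>X. g (lo q) \<subset> B \<and> B \<subset> g (hi q)" for q
  proof -
    define m where "m = (lo q + hi q) / 2"
    have "lo q < m" "m < hi q" using lh(1) by (auto simp: m_def)
    then have "g (lo q) \<subset> g m" "g m \<subset> g (hi q)" using g(2) by blast+
    then show ?thesis using clo_between[OF ch, of "g (lo q)" "g m" "g (hi q)"] g(1) by blast
  qed
  define h where "h q = (SOME B. B \<in> X \<and> g (lo q) \<subset> B \<and> B \<subset> g (hi q))" for q
  have h: "h q \<in> X" "g (lo q) \<subset> h q" "h q \<subset> g (hi q)" for q
    using someI_ex[OF ex[of q, unfolded Bex_def]] unfolding h_def by blast+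
  have "range h \<subseteq> X" using h(1) by blast
  moreover have "\<forall>p q. p < q \<longrightarrow> h p \<subset> h q"
  proof (intro allI impI)
    fix p q :: rat assume "p < q"
    then have "hi p < lo q" using lh(2) by blast
    then have "g (hi p) \<subset> g (lo q)" using g(2) by blast
    then show "h p \<subset> h q" using h(2)[of q] h(3)[of p] by blast
  qed
  ultimately show False using os unfolding os_strict_iff by blast
qed



lemma chain_top_scattered:
  assumes chK: "chainS K" and osK: "order_scattered K (\<subseteq>)"
  shows "top_scattered cantor_top (chi ` K)"
  unfolding top_scattered_def
proof (intro allI impI)
  fix S0 assume S0: "S0 \<subseteq> chi ` K" "S0 \<noteq> {}"
  define S where "S = {A. chi A \<in> S0}"
  have SK: "S \<subseteq> K"
  proof
    fix A assume "A \<in> S"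
    then have "chi A \<in> chi ` K" using S0 by (auto simp: S_def)
    then show "A \<in> K" using chi_inj by (metis imageE)
  qed
  have S0eq: "S0 = chi ` S"
  proof
    show "S0 \<subseteq> chi ` S"
    proof
      fix h assume "h \<in> S0"
      then have "{x. h x} \<in> S" using chi_surj[of h] by (simp add: S_def)
      then show "h \<in> chi ` S" using chi_surj[of h] by (metis imageI)
    qed
  qed (auto simp: S_def)
  have Sne: "S \<noteq> {}" using S0 S0eq by blast
  have chS: "chainS S" using chK SK unfolding chainS_def by blast
  have cmp: "A \<subseteq> B \<or> B \<subseteq> A" if "A \<in> S" "B \<in> S" for A B
    using chS that unfolding chainS_def by blast
  show "\<exists>x\<in>S0. \<exists>U. openin cantor_top U \<and> U \<inter> S0 = {x}"
  proof (rule ccontr)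
    assume noiso: "\<not> (\<exists>x\<in>S0. \<exists>U. openin cantor_top U \<and> U \<inter> S0 = {x})"
    define mn where "mn A \<longleftrightarrow> (\<forall>B\<in>S. \<not> B \<subset> A)" for A
    define mx where "mx A \<longleftrightarrow> (\<forall>B\<in>S. \<not> A \<subset> B)" for A
    define cov where "cov B A \<longleftrightarrow> B \<in> S \<and> A \<in> S \<and> B \<subset> A \<and> \<not> (\<exists>C\<in>S. B \<subset> C \<and> C \<subset> A)" for B A
    have iso: False if A: "A \<in> S" and L: "mn A \<or> (\<exists>B. cov B A)" and R: "mx A \<or> (\<exists>B. cov A B)" for A
    proof -
      obtain F where F: "finite F" "F \<subseteq> A" "\<forall>B\<in>S. B \<subset> A \<longrightarrow> \<not> F \<subseteq> B"
      proof (cases "mn A")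
        case True
        then show ?thesis using that[of "{}"] by (auto simp: mn_def)
      next
        case False
        then obtain B0 where B0: "cov B0 A" using L by blast
        then obtain f where f: "f \<in> A" "f \<notin> B0" by (auto simp: cov_def)
        have "\<forall>B\<in>S. B \<subset> A \<longrightarrow> \<not> {f} \<subseteq> B"
        proof (intro ballI impI)
          fix B assume B: "B \<in> S" "B \<subset> A"
          have B0S: "B0 \<in> S" using B0 by (simp add: cov_def)
          have "B \<subseteq> B0"
          proof (rule ccontr)
            assume "\<not> B \<subseteq> B0"
            then have "B0 \<subset> B" using cmp[OF B(1) B0S] by blast
            then show False using B0 B by (auto simp: cov_def)
          qed
          then show "\<not> {f} \<subseteq> B" using f by blast
        qed
        then show ?thesis using that[of "{f}"] f by blast
      qed
      obtain G where G: "finite G" "G \<inter> A = {}" "\<forall>B\<in>S. A \<subset> B \<longrightarrow> G \<inter> B \<noteq> {}"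
      proof (cases "mx A")
        case True
        then show ?thesis using that[of "{}"] by (auto simp: mx_def)
      next
        case False
        then obtain B0 where B0: "cov A B0" using R by blast
        then obtain g where g: "g \<in> B0" "g \<notin> A" by (auto simp: cov_def)
        have "\<forall>B\<in>S. A \<subset> B \<longrightarrow> {g} \<inter> B \<noteq> {}"
        proof (intro ballI impI)
          fix B assume B: "B \<in> S" "A \<subset> B"
          have B0S: "B0 \<in> S" using B0 by (simp add: cov_def)
          have "B0 \<subseteq> B"
          proof (rule ccontr)
            assume "\<not> B0 \<subseteq> B"
            then have "B \<subset> B0" using cmp[OF B(1) B0S] by blast
            then show False using B0 B by (auto simp: cov_def)
          qed
          then show "{g} \<inter> B \<noteq> {}" using g by blast
        qed
        then show ?thesis using that[of "{g}"] g by blast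
      qed
      have op: "openin cantor_top (nbhd F G)" using openin_nbhd F(1) G(1) by blast
      have "nbhd F G \<inter> S0 = {chi A}"
      proof
        show "{chi A} \<subseteq> nbhd F G \<inter> S0"
          using F(2) G(2) A by (auto simp: chi_in_nbhd S_def)
        show "nbhd F G \<inter> S0 \<subseteq> {chi A}"
        proof
          fix h assume h: "h \<in> nbhd F G \<inter> S0"
          have "h \<in> chi ` S" using h S0eq by simp
          then obtain B where B: "B \<in> S" "h = chi B" by blast
          have "chi B \<in> nbhd F G" using h B(2) by simp
          then have "F \<subseteq> B" "G \<inter> B = {}" unfolding chi_in_nbhd by blast+
          then have "\<not> B \<subset> A" "\<not> A \<subset> B" using F(3) G(3) B(1) by blast+
          then have "B = A" using cmp[OF A B(1)] by blast
          then show "h \<in> {chi A}" using B(2) by simp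
        qed
      qed
      moreover have "chi A \<in> S0" using A by (simp add: S_def)
      ultimately show False using noiso op by blast
    qed
    define R where "R = {A\<in>S. \<not> (\<exists>B. cov B A)}"
    have predR: "B \<in> R" if "cov B A" for B A
    proof -
      have BS: "B \<in> S" using that by (simp add: cov_def)
      have "\<not> (\<exists>C. cov C B)"
      proof
        assume "\<exists>C. cov C B"
        then show False using iso[OF BS] that by blast
      qed
      then show ?thesis using BS by (simp add: R_def)
    qed
    have below: "A \<subseteq> C'" if "cov C' C" "A \<in> S" "A \<subset> C" for A C C'
    proof (rule ccontr)
      assume "\<not> A \<subseteq> C'"
      have C'S: "C' \<in> S" using that(1) by (simp add: cov_def)
      then have "C' \<subset> A" using cmp[OF that(2) C'S] \<open>\<not> A \<subseteq> C'\<close> by blast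
      then show False using that by (auto simp: cov_def)
    qed
    have between: "\<exists>C\<in>S. A \<subset> C \<and> C \<subset> A'" if "A \<in> S" "A' \<in> S" "A \<subset> A'" "\<not> cov A A'" for A A'
      using that by (auto simp: cov_def)
    have dens: "\<exists>E\<in>R. A \<subset> E \<and> E \<subset> A'" if AR: "A \<in> R" and A'R: "A' \<in> R" and AA': "A \<subset> A'" for A A'
    proof -
      have AS: "A \<in> S" and A'S: "A' \<in> S" using AR A'R by (auto simp: R_def)
      have "\<not> cov A A'" using A'R by (auto simp: R_def)
      then obtain C where C: "C \<in> S" "A \<subset> C" "C \<subset> A'" using between[OF AS A'S AA'] by blast
      show ?thesis
      proof (cases "C \<in> R")
        case True then show ?thesis using C by blast
      next
        case False
        then obtain C' where C': "cov C' C" using C(1) by (auto simp: R_def)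
        have AC': "A \<subseteq> C'" using below[OF C' AS C(2)] .
        show ?thesis
        proof (cases "A = C'")
          case False
          then have "A \<subset> C'" using AC' by blast
          moreover have "C' \<subset> A'" using C' C(3) by (auto simp: cov_def)
          ultimately show ?thesis using predR[OF C'] by blast
        next
          case True
          then have covAC: "cov A C" using C' by simp
          have nosucc: "\<not> cov C D" for D
          proof
            assume "cov C D"
            then show False using iso[OF C(1)] covAC by blast
          qed
          obtain D where D: "D \<in> S" "C \<subset> D" "D \<subset> A'" using between[OF C(1) A'S C(3) nosucc] by blast
          show ?thesis
          proof (cases "D \<in> R")
            case True then show ?thesis using C(2) D by blast
          next
            case False
            then obtain D' where D': "cov D' D" using D(1) by (auto simp: R_def)
            have CD': "C \<subseteq> D'" using below[OF D' C(1) D(2)] .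
            have "C \<noteq> D'" using nosucc D' by blast
            then have "C \<subset> D'" using CD' by blast
            moreover have "D' \<subset> A'" using D' D(3) by (auto simp: cov_def)
            ultimately show ?thesis using predR[OF D'] C(2) by blast
          qed
        qed
      qed
    qed
    have rho: "\<exists>Y\<in>R. Y \<subseteq> X \<and> (X \<notin> R \<longrightarrow> cov Y X) \<and> (X \<in> R \<longrightarrow> Y = X)" if XS: "X \<in> S" for X
    proof (cases "X \<in> R")
      case True then show ?thesis by blast
    next
      case False
      then obtain Y where c: "cov Y X" using XS by (auto simp: R_def)
      have "Y \<in> R" using predR[OF c] .
      moreover have "Y \<subseteq> X" using c by (auto simp: cov_def)
      ultimately show ?thesis using c False by blast
    qed
    have two: "\<exists>a\<in>R. \<exists>b\<in>R. a \<subset> b"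
    proof -
      obtain A where AS: "A \<in> S" using Sne by blast
      have "\<not> (mn A \<or> (\<exists>B. cov B A)) \<or> \<not> (mx A \<or> (\<exists>B. cov A B))" using iso[OF AS] by blast
      then show ?thesis
      proof
        assume h: "\<not> (mn A \<or> (\<exists>B. cov B A))"
        then have AR: "A \<in> R" using AS by (simp add: R_def)
        obtain B where B: "B \<in> S" "B \<subset> A" using h by (auto simp: mn_def)
        obtain Y where Y: "Y \<in> R" "Y \<subseteq> B" using rho[OF B(1)] by blast
        show ?thesis using AR Y B(2) by blast
      next
        assume h: "\<not> (mx A \<or> (\<exists>B. cov A B))"
        obtain B where B: "B \<in> S" "A \<subset> B" using h by (auto simp: mx_def)
        have "\<not> cov A B" using h by blast
        then obtain C where C: "C \<in> S" "A \<subset> C" "C \<subset> B" using between[OF AS B(1) B(2)] by blast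
        obtain YA where YA: "YA \<in> R" "YA \<subseteq> A" using rho[OF AS] by blast
        obtain YB where YB: "YB \<in> R" "YB \<subseteq> B" "B \<notin> R \<longrightarrow> cov YB B" "B \<in> R \<longrightarrow> YB = B" using rho[OF B(1)] by blast
        have "A \<subset> YB"
        proof (cases "B \<in> R")
          case True
          then have "YB = B" using YB(4) by blast
          then show ?thesis using B(2) by simp
        next
          case False
          then have "cov YB B" using YB(3) by blast
          then have "C \<subseteq> YB" using below C by blast
          then show ?thesis using C(2) by blast
        qed
        then show ?thesis using YA YB(1) by blast
      qed
    qed
    then obtain a b where ab: "a \<in> R" "b \<in> R" "a \<subset> b" by blast
    define S' where "S' = {E\<in>R. a \<subset> E \<and> E \<subset> b}"
    have "\<exists>g::rat \<Rightarrow> _. (\<forall>x. g x \<in> S') \<and> (\<forall>x y. x < y \<longrightarrow> g x \<subset> g y)"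
    proof (rule rat_into_dense)
      show "S' \<noteq> {}" using dens[OF ab] by (auto simp: S'_def)
      show "x \<subset> z" if "x \<subset> y" "y \<subset> z" for x y z :: "_ set" using that by blast
      show "\<exists>z\<in>S'. x \<subset> z \<and> z \<subset> y" if xy: "x \<in> S'" "y \<in> S'" "x \<subset> y" for x y
      proof -
        obtain E where E: "E \<in> R" "x \<subset> E" "E \<subset> y" using dens[of x y] xy by (auto simp: S'_def)
        have "a \<subset> x" "y \<subset> b" using xy by (auto simp: S'_def)
        then have "a \<subset> E" "E \<subset> b" using E by (meson psubset_trans)+
        then have "E \<in> S'" using E(1) by (simp add: S'_def)
        then show ?thesis using E by blast
      qed
      show "\<exists>y\<in>S'. x \<subset> y" if xy: "x \<in> S'" for x
      proof -
        obtain E where E: "E \<in> R" "x \<subset> E" "E \<subset> b" using dens[of x b] xy ab by (auto simp: S'_def)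
        have "a \<subset> x" using xy by (auto simp: S'_def)
        then have "a \<subset> E" using E by (meson psubset_trans)
        then have "E \<in> S'" using E by (simp add: S'_def)
        then show ?thesis using E by blast
      qed
      show "\<exists>y\<in>S'. y \<subset> x" if xy: "x \<in> S'" for x
      proof -
        obtain E where E: "E \<in> R" "a \<subset> E" "E \<subset> x" using dens[of a x] xy ab by (auto simp: S'_def)
        have "x \<subset> b" using xy by (auto simp: S'_def)
        then have "E \<subset> b" using E by (meson psubset_trans)
        then have "E \<in> S'" using E by (simp add: S'_def)
        then show ?thesis using E by blast
      qed
    qed
    then obtain g :: "rat \<Rightarrow> _" where g: "\<forall>x. g x \<in> S'" "\<forall>x y. x < y \<longrightarrow> g x \<subset> g y" by blast
    have "range g \<subseteq> K" using g(1) SK by (auto simp: S'_def R_def)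
    then show False using osK g(2) unfolding os_strict_iff by blast
  qed
qed



lemma ts_subset: "top_scattered T A \<Longrightarrow> B \<subseteq> A \<Longrightarrow> top_scattered T B"
  unfolding top_scattered_def by (meson subset_trans)

lemma Hausdorff_cantor: "Hausdorff_space cantor_top"
  unfolding cantor_top_def by (rule Hausdorff_space_product_topology[THEN iffD2]) simp

lemma compact_cantor: "compact_space cantor_top"
  unfolding cantor_top_def by (rule compact_space_product_topology[THEN iffD2]) (simp add: compact_space_discrete_topology)

lemma ts_prod:
  assumes A: "top_scattered X A" and B: "top_scattered Y B"
  shows "top_scattered (prod_topology X Y) (A \<times> B)"
  unfolding top_scattered_def
proof (intro allI impI)
  fix S assume S: "S \<subseteq> A \<times> B" "S \<noteq> {}"
  have "fst ` S \<subseteq> A" "fst ` S \<noteq> {}" using S by auto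
  then obtain x U where xU: "x \<in> fst ` S" "openin X U" "U \<inter> fst ` S = {x}"
    using A unfolding top_scattered_def by meson
  define Sx where "Sx = {y. (x, y) \<in> S}"
  have "Sx \<subseteq> B" "Sx \<noteq> {}" using S xU(1) by (auto simp: Sx_def)
  then obtain y V where yV: "y \<in> Sx" "openin Y V" "V \<inter> Sx = {y}"
    using B unfolding top_scattered_def by meson
  have op: "openin (prod_topology X Y) (U \<times> V)" using xU(2) yV(2) by (simp add: openin_prod_Times_iff)
  have "(U \<times> V) \<inter> S = {(x, y)}"
  proof
    show "(U \<times> V) \<inter> S \<subseteq> {(x, y)}"
    proof
      fix p assume p: "p \<in> (U \<times> V) \<inter> S"
      obtain a b where pab: "p = (a, b)" by (cases p)
      have "a \<in> U \<inter> fst ` S" using p pab by force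
      then have "a = x" using xU(3) by blast
      then have "b \<in> V \<inter> Sx" using p pab by (auto simp: Sx_def)
      then have "b = y" using yV(3) by blast
      then show "p \<in> {(x, y)}" using pab \<open>a = x\<close> by simp
    qed
    show "{(x, y)} \<subseteq> (U \<times> V) \<inter> S"
      using xU yV by (auto simp: Sx_def)
  qed
  then show "\<exists>p\<in>S. \<exists>W. openin (prod_topology X Y) W \<and> W \<inter> S = {p}"
    using op by blast
qed

lemma ts_image:
  assumes HX: "Hausdorff_space X" and HY: "Hausdorff_space Y" and f: "continuous_map X Y f"
    and cA: "compactin X A" and sA: "top_scattered X A"
  shows "top_scattered Y (f ` A)"
  unfolding top_scattered_def
proof (intro allI impI)
  fix S assume S: "S \<subseteq> f ` A" "S \<noteq> {}"
  have cfA: "compactin Y (f ` A)" using image_compactin[OF cA f] .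
  have clfA: "closedin Y (f ` A)" using compactin_imp_closedin[OF HY cfA] .
  have clA: "closedin X A" using compactin_imp_closedin[OF HX cA] .
  define S' where "S' = Y closure_of S"
  have S'cl: "closedin Y S'" by (simp add: S'_def)
  have SS': "S \<subseteq> S'" using S(1) clfA closure_of_subset closedin_subset
    unfolding S'_def by (metis subset_trans)
  have S'fA: "S' \<subseteq> f ` A" using S(1) clfA closure_of_minimal unfolding S'_def by blast
  define FF where "FF = {Z. Z \<subseteq> A \<and> closedin X Z \<and> f ` Z = S'}"
  define Z0 where "Z0 = A \<inter> {x \<in> topspace X. f x \<in> S'}"
  have Z0: "Z0 \<in> FF"
  proof -
    have "closedin X {x \<in> topspace X. f x \<in> S'}" using closedin_continuous_map_preimage[OF f S'cl] .
    then have "closedin X Z0" using clA by (simp add: Z0_def closedin_Int)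
    moreover have "f ` Z0 = S'"
    proof
      show "f ` Z0 \<subseteq> S'" by (auto simp: Z0_def)
      show "S' \<subseteq> f ` Z0"
      proof
        fix y assume y: "y \<in> S'"
        then obtain x where x: "x \<in> A" "y = f x" using S'fA by blast
        have "x \<in> topspace X" using x(1) cA compactin_subset_topspace by blast
        then show "y \<in> f ` Z0" using x y by (auto simp: Z0_def)
      qed
    qed
    ultimately show ?thesis by (auto simp: FF_def Z0_def)
  qed
  have FFsub: "Z \<subseteq> topspace X" if "Z \<in> FF" for Z using that closedin_subset by (auto simp: FF_def)
  define AA where "AA = (\<lambda>Z. topspace X - Z) ` FF"
  have "\<exists>M\<in>AA. \<forall>Xa\<in>AA. M \<subseteq> Xa \<longrightarrow> Xa = M"
  proof (rule subset_Zorn_nonempty)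
    show "AA \<noteq> {}" using Z0 by (auto simp: AA_def)
    fix CC assume CC: "CC \<noteq> {}" "subset.chain AA CC"
    define ZZ where "ZZ = (\<lambda>C. topspace X - C) ` CC"
    have ZZFF: "ZZ \<subseteq> FF"
    proof
      fix Z assume "Z \<in> ZZ"
      then obtain C where C: "C \<in> CC" "Z = topspace X - C" by (auto simp: ZZ_def)
      then have "C \<in> AA" using CC(2) unfolding subset.chain_def by blast
      then obtain Z' where Z': "Z' \<in> FF" "C = topspace X - Z'" by (auto simp: AA_def)
      have "Z = Z'" using C(2) Z' FFsub[OF Z'(1)] by blast
      then show "Z \<in> FF" using Z' by simp
    qed
    have ZZne: "ZZ \<noteq> {}" using CC(1) by (simp add: ZZ_def)
    have ZZch: "Z1 \<subseteq> Z2 \<or> Z2 \<subseteq> Z1" if Z12: "Z1 \<in> ZZ" "Z2 \<in> ZZ" for Z1 Z2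
    proof -
      obtain C1 C2 where "C1 \<in> CC" "C2 \<in> CC" "Z1 = topspace X - C1" "Z2 = topspace X - C2"
        using Z12 by (auto simp: ZZ_def)
      moreover have "C1 \<subseteq> C2 \<or> C2 \<subseteq> C1" using CC(2) calculation(1,2) unfolding subset.chain_def by blast
      ultimately show ?thesis by blast
    qed
    have eqU: "\<Union>CC = topspace X - \<Inter>ZZ"
    proof -
      have "C \<subseteq> topspace X" if "C \<in> CC" for C
        using that CC(2) unfolding subset.chain_def AA_def by blast
      then show ?thesis unfolding ZZ_def by blast
    qed
    have "\<Inter>ZZ \<in> FF"
    proof -
      have sub: "\<Inter>ZZ \<subseteq> A" using ZZne ZZFF by (auto simp: FF_def)
      have cl: "closedin X (\<Inter>ZZ)" using ZZne ZZFF by (intro closedin_Inter) (auto simp: FF_def)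
      have "f ` \<Inter>ZZ = S'"
      proof
        show "f ` \<Inter>ZZ \<subseteq> S'" using ZZne ZZFF by (auto simp: FF_def)
        show "S' \<subseteq> f ` \<Inter>ZZ"
        proof
          fix y assume y: "y \<in> S'"
          define UU where "UU = (\<lambda>Z. Z \<inter> {x \<in> topspace X. f x \<in> {y}}) ` ZZ"
          have clY: "closedin Y {y}" using y S'cl HY closedin_subset Hausdorff_imp_t1_space t1_space_closedin_singleton
            by (metis in_mono)
          have UUcl: "\<forall>C\<in>UU. closedin X C"
            using ZZFF closedin_continuous_map_preimage[OF f clY] by (auto simp: UU_def FF_def intro: closedin_Int)
          have "\<forall>F. finite F \<and> F \<subseteq> UU \<longrightarrow> A \<inter> \<Inter>F \<noteq> {}"
          proof (intro allI impI)
            fix F assume F: "finite F \<and> F \<subseteq> UU"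
            then obtain G where G: "finite G" "G \<subseteq> ZZ" "F = (\<lambda>Z. Z \<inter> {x \<in> topspace X. f x \<in> {y}}) ` G"
              unfolding UU_def by (meson finite_subset_image)
            obtain Zm where Zm: "Zm \<in> ZZ" "\<forall>Z\<in>G. Zm \<subseteq> Z"
            proof (cases "G = {}")
              case True then show ?thesis using that ZZne by blast
            next
              case False
              have "\<exists>Zm\<in>G. \<forall>Z\<in>G. Zm \<subseteq> Z" using G(1) False G(2)
              proof (induction G rule: finite_ne_induct)
                case (singleton x) then show ?case by blast
              next
                case (insert x G)
                then obtain Zm where Zm: "Zm \<in> G" "\<forall>Z\<in>G. Zm \<subseteq> Z" by blast
                have "x \<in> ZZ" "Zm \<in> ZZ" using insert.prems Zm(1) by blast+
                then have "x \<subseteq> Zm \<or> Zm \<subseteq> x" using ZZch by blast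
                then show ?case using Zm by blast
              qed
              then show ?thesis using that G(2) by blast
            qed
            have "f ` Zm = S'" using Zm(1) ZZFF by (auto simp: FF_def)
            then obtain x where x: "x \<in> Zm" "f x = y" using y by (metis imageE)
            have "x \<in> A" "x \<in> topspace X" using x(1) Zm(1) ZZFF FFsub by (auto simp: FF_def)
            then have "x \<in> A \<inter> \<Inter>F" using x Zm(2) G(3) by auto
            then show "A \<inter> \<Inter>F \<noteq> {}" by blast
          qed
          then have "A \<inter> \<Inter>UU \<noteq> {}" using cA UUcl unfolding compactin_fip by blast
          then obtain x where x: "x \<in> A" "x \<in> \<Inter>UU" by blast
          have "x \<in> \<Inter>ZZ" "f x = y" using x(2) ZZne by (auto simp: UU_def)
          then show "y \<in> f ` \<Inter>ZZ" by blast
        qed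
      qed
      then show ?thesis using sub cl by (simp add: FF_def)
    qed
    then show "\<Union>CC \<in> AA" unfolding eqU AA_def by blast
  qed
  then obtain M where M: "M \<in> AA" "\<forall>Xa\<in>AA. M \<subseteq> Xa \<longrightarrow> Xa = M" by blast
  then obtain Zm where Zm: "Zm \<in> FF" "M = topspace X - Zm" by (auto simp: AA_def)
  have minimal: "Z = Zm" if "Z \<in> FF" "Z \<subseteq> Zm" for Z
  proof -
    have "topspace X - Z \<in> AA" using that(1) by (simp add: AA_def)
    moreover have "M \<subseteq> topspace X - Z" using Zm(2) that(2) by blast
    ultimately have "topspace X - Z = M" using M(2) by blast
    then show ?thesis using Zm(2) FFsub[OF that(1)] FFsub[OF Zm(1)] by blast
  qed
  have ZmA: "Zm \<subseteq> A" "closedin X Zm" "f ` Zm = S'" using Zm(1) by (auto simp: FF_def)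
  have "Zm \<noteq> {}" using ZmA(3) SS' S(2) by blast
  then obtain z U where zU: "z \<in> Zm" "openin X U" "U \<inter> Zm = {z}"
    using sA ZmA(1) unfolding top_scattered_def by meson
  define Z' where "Z' = Zm - U"
  have Z'cl: "closedin X Z'" using ZmA(2) zU(2) by (simp add: Z'_def closedin_diff)
  have "f ` Z' \<noteq> S'"
  proof
    assume "f ` Z' = S'"
    then have "Z' \<in> FF" using Z'cl ZmA(1) by (auto simp: FF_def Z'_def)
    then have "Z' = Zm" using minimal by (auto simp: Z'_def)
    then show False using zU by (auto simp: Z'_def)
  qed
  moreover have "f ` Z' \<subseteq> S'" using ZmA(3) by (auto simp: Z'_def)
  ultimately obtain y0 where y0: "y0 \<in> S'" "y0 \<notin> f ` Z'" by blast
  have cZ': "compactin Y (f ` Z')"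
    using image_compactin[OF closed_compactin[OF cA _ Z'cl] f] ZmA(1) by (auto simp: Z'_def)
  have clZ': "closedin Y (f ` Z')" using compactin_imp_closedin[OF HY cZ'] .
  define V where "V = topspace Y - f ` Z'"
  have Vop: "openin Y V" using clZ' by (simp add: V_def openin_diff)
  have VS': "V \<inter> S' = {f z}"
  proof
    show "V \<inter> S' \<subseteq> {f z}"
    proof
      fix y assume y: "y \<in> V \<inter> S'"
      then obtain w where w: "w \<in> Zm" "y = f w" using ZmA(3) by blast
      have "w \<notin> Z'" using y w(2) by (auto simp: V_def)
      then have "w \<in> U" using w(1) by (simp add: Z'_def)
      then have "w = z" using zU(3) w(1) by blast
      then show "y \<in> {f z}" using w(2) by simp
    qed
    have fz: "f z \<in> S'" using ZmA(3) zU(1) by blast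
    obtain w where w: "w \<in> Zm" "y0 = f w" using y0(1) ZmA(3) by (metis imageE)
    have "w \<notin> Z'" using y0(2) w(2) by blast
    then have "w = z" using w(1) zU(3) by (auto simp: Z'_def)
    then have "f z \<notin> f ` Z'" using y0(2) w(2) by simp
    moreover have "f z \<in> topspace Y" using fz S'cl closedin_subset by blast
    ultimately show "{f z} \<subseteq> V \<inter> S'" using fz by (simp add: V_def)
  qed
  have fzcl: "f z \<in> Y closure_of S" using VS' unfolding S'_def by blast
  then have "V \<inter> S \<noteq> {}"
    using Vop VS' unfolding in_closure_of by blast
  moreover have "V \<inter> S \<subseteq> {f z}" using VS' SS' by blast
  ultimately have "V \<inter> S = {f z}" by (simp add: subset_singleton_iff)
  moreover have "f z \<in> S" using calculation by blast
  ultimately show "\<exists>x\<in>S. \<exists>V. openin Y V \<and> V \<inter> S = {x}" using Vop by blast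
qed



definition andf :: "('b \<Rightarrow> bool) \<times> ('b \<Rightarrow> bool) \<Rightarrow> 'b \<Rightarrow> bool" where
  "andf p = (\<lambda>x. fst p x \<and> snd p x)"

lemma openin_coord: "openin cantor_top {h. h k = v}"
proof -
  have "{h. h k = v} = (if v then nbhd {k} {} else nbhd {} {k})"
    by (auto simp: nbhd_def)
  then show ?thesis using openin_nbhd[of "{k}" "{}"] openin_nbhd[of "{}" "{k}"] by simp
qed

lemma cont_into_cantor:
  "(\<And>k. continuous_map X (discrete_topology UNIV) (\<lambda>p. f p k)) \<Longrightarrow> continuous_map X cantor_top f"
  unfolding cantor_top_def continuous_map_componentwise_UNIV by simp

lemma and_cont: "continuous_map (prod_topology cantor_top cantor_top) cantor_top andf"
proof -
  have "continuous_map (prod_topology cantor_top cantor_top) (discrete_topology UNIV) (\<lambda>p. andf p k)" for k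
    unfolding continuous_map_def
  proof (intro conjI allI impI)
    show "(\<lambda>p. andf p k) \<in> topspace (prod_topology cantor_top cantor_top) \<rightarrow> topspace (discrete_topology UNIV)"
      by simp
    fix U :: "bool set"
    show "openin (prod_topology cantor_top cantor_top) {x \<in> topspace (prod_topology cantor_top cantor_top). andf x k \<in> U}"
    proof (subst openin_subopen, intro ballI)
      fix p assume p: "p \<in> {x \<in> topspace (prod_topology cantor_top cantor_top). andf x k \<in> U}"
      obtain a b where ab: "p = (a, b)" by (cases p)
      define T where "T = {h. h k = a k} \<times> {h. h k = b k}"
      have "openin (prod_topology cantor_top cantor_top) T"
        unfolding T_def openin_prod_Times_iff by (simp add: openin_coord)
      moreover have "p \<in> T" using ab by (simp add: T_def)
      moreover have "T \<subseteq> {x \<in> topspace (prod_topology cantor_top cantor_top). andf x k \<in> U}"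
        using p ab by (auto simp: T_def andf_def)
      ultimately show "\<exists>T. openin (prod_topology cantor_top cantor_top) T \<and> p \<in> T \<and>
          T \<subseteq> {x \<in> topspace (prod_topology cantor_top cantor_top). andf x k \<in> U}" by blast
    qed
  qed
  then show ?thesis by (rule cont_into_cantor)
qed

lemma openin_cantor_UNIV: "openin cantor_top UNIV"
  using openin_topspace[of cantor_top] by simp

definition Yset :: "(nat \<Rightarrow> ('b \<Rightarrow> bool) set) \<Rightarrow> nat \<Rightarrow> ('b \<Rightarrow> bool) set" where
  "Yset K n = {(\<lambda>x. \<forall>i<n. c i x) | c. \<forall>i<n. c i \<in> K i}"

lemma Yset_0: "Yset K 0 = {\<lambda>x. True}"
  by (auto simp: Yset_def)

lemma Yset_Suc: "Yset K (Suc n) = andf ` (Yset K n \<times> K n)"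
proof
  show "Yset K (Suc n) \<subseteq> andf ` (Yset K n \<times> K n)"
  proof
    fix h assume "h \<in> Yset K (Suc n)"
    then obtain c where c: "h = (\<lambda>x. \<forall>i<Suc n. c i x)" "\<forall>i<Suc n. c i \<in> K i" by (auto simp: Yset_def)
    have "(\<lambda>x. \<forall>i<n. c i x) \<in> Yset K n" using c(2) by (auto simp: Yset_def)
    moreover have "c n \<in> K n" using c(2) by simp
    moreover have "h = andf ((\<lambda>x. \<forall>i<n. c i x), c n)"
      using c(1) by (auto simp: andf_def less_Suc_eq fun_eq_iff)
    ultimately show "h \<in> andf ` (Yset K n \<times> K n)" by blast
  qed
  show "andf ` (Yset K n \<times> K n) \<subseteq> Yset K (Suc n)"
  proof
    fix h assume "h \<in> andf ` (Yset K n \<times> K n)"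
    then obtain a b where ab: "a \<in> Yset K n" "b \<in> K n" "h = andf (a, b)" by blast
    then obtain c where c: "a = (\<lambda>x. \<forall>i<n. c i x)" "\<forall>i<n. c i \<in> K i" by (auto simp: Yset_def)
    define c' where "c' = c(n := b)"
    have "\<forall>i<Suc n. c' i \<in> K i" using c(2) ab(2) by (auto simp: c'_def less_Suc_eq)
    moreover have "h = (\<lambda>x. \<forall>i<Suc n. c' i x)"
      using ab(3) c(1) by (auto simp: andf_def c'_def less_Suc_eq fun_eq_iff)
    ultimately show "h \<in> Yset K (Suc n)" unfolding Yset_def by blast
  qed
qed

lemma Yset_scattered:
  assumes "\<forall>i<n. compactin cantor_top (K i) \<and> top_scattered cantor_top (K i)"
  shows "compactin cantor_top (Yset K n) \<and> top_scattered cantor_top (Yset K n)"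
  using assms
proof (induction n)
  case 0
  have "top_scattered cantor_top {\<lambda>x. True}"
    unfolding top_scattered_def
  proof (intro allI impI)
    fix S assume "S \<subseteq> {\<lambda>x. True}" "S \<noteq> {}"
    then have "S = {\<lambda>x. True}" by blast
    then show "\<exists>x\<in>S. \<exists>U. openin cantor_top U \<and> U \<inter> S = {x}"
      by (intro bexI[of _ "\<lambda>x. True"] exI[of _ UNIV]) (auto simp: openin_cantor_UNIV)
  qed
  then show ?case by (simp add: Yset_0)
next
  case (Suc n)
  then have IH: "compactin cantor_top (Yset K n)" "top_scattered cantor_top (Yset K n)" by simp_all
  have Kn: "compactin cantor_top (K n)" "top_scattered cantor_top (K n)" using Suc.prems by simp_all
  have cp: "compactin (prod_topology cantor_top cantor_top) (Yset K n \<times> K n)"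
    using IH(1) Kn(1) by (simp add: compactin_Times)
  have sp: "top_scattered (prod_topology cantor_top cantor_top) (Yset K n \<times> K n)"
    using ts_prod[OF IH(2) Kn(2)] .
  have H2: "Hausdorff_space (prod_topology cantor_top cantor_top)"
    by (rule Hausdorff_space_prod_topology[THEN iffD2]) (simp add: Hausdorff_cantor)
  show ?case unfolding Yset_Suc
    using image_compactin[OF cp and_cont] ts_image[OF H2 Hausdorff_cantor and_cont cp sp] by simp
qed

lemma families_scattered:
  fixes n :: nat and D :: "nat \<Rightarrow> 'b set set"
  assumes "\<forall>i<n. chainS (D i) \<and> order_scattered (D i) (\<subseteq>)"
  shows "top_scattered cantor_top (chi ` {(\<Inter>i<n. c i) | c. \<forall>i<n. c i \<in> clo (insert UNIV (D i))})"
proof -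
  define K where "K i = chi ` clo (insert UNIV (D i))" for i
  have "compactin cantor_top (K i) \<and> top_scattered cantor_top (K i)" if "i < n" for i
  proof
    show "compactin cantor_top (K i)"
      unfolding K_def closure_chi[symmetric] by (rule closedin_compact_space[OF compact_cantor]) simp
    have ch: "chainS (insert UNIV (D i))" using assms that unfolding chainS_def by blast
    have os: "order_scattered (insert UNIV (D i)) (\<subseteq>)" using assms that os_insert by blast
    show "top_scattered cantor_top (K i)"
      unfolding K_def by (rule chain_top_scattered[OF chain_clo[OF ch] os_clo[OF ch os]])
  qed
  then have Y: "top_scattered cantor_top (Yset K n)" using Yset_scattered by blast
  have "chi ` {(\<Inter>i<n. c i) | c. \<forall>i<n. c i \<in> clo (insert UNIV (D i))} \<subseteq> Yset K n"
  proof
    fix h assume "h \<in> chi ` {(\<Inter>i<n. c i) | c. \<forall>i<n. c i \<in> clo (insert UNIV (D i))}"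
    then obtain c where c: "h = chi (\<Inter>i<n. c i)" "\<forall>i<n. c i \<in> clo (insert UNIV (D i))" by blast
    have "h = (\<lambda>x. \<forall>i<n. chi (c i) x)" using c(1) by (auto simp: chi_def fun_eq_iff)
    moreover have "\<forall>i<n. chi (c i) \<in> K i" using c(2) by (auto simp: K_def)
    ultimately have "\<exists>c'. h = (\<lambda>x. \<forall>i<n. c' i x) \<and> (\<forall>i<n. c' i \<in> K i)"
      by (intro exI[of _ "\<lambda>i. chi (c i)"] conjI) simp_all
    then show "h \<in> Yset K n" unfolding Yset_def by simp
  qed
  then show ?thesis by (rule ts_subset[OF Y])
qed



lemma clo_mono: "X \<subseteq> Y \<Longrightarrow> clo X \<subseteq> clo Y"
  unfolding in_clo subset_iff by (simp add: Bex_def) (meson)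

lemma Q_lemma:
  fixes A :: "rat \<Rightarrow> 'b set"
  assumes strict: "\<forall>p q. p < q \<longrightarrow> A p \<subset> A q"
  defines "B \<equiv> (\<lambda>q. \<Union>{A p | p. p < q})"
  shows "(\<forall>q. B q \<in> clo (range A)) \<and> (\<forall>T. chi ` range B \<subseteq> T \<longrightarrow> \<not> top_scattered cantor_top T)"
proof -
  have mono: "A p \<subseteq> A q" if pq: "p \<le> q" for p q
  proof (cases "p = q")
    case False then have "p < q" using pq by simp
    then show ?thesis using strict by blast
  qed simp
  have chA: "chainS (range A)"
    unfolding chainS_def by (metis linear mono rangeE)
  define E where "E q = {A p | p. p < q}" for q
  have Ene: "E q \<noteq> {}" for q
  proof -
    have "A (q - 1) \<in> E q" unfolding E_def by (intro CollectI exI[of _ "q - 1"]) simp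
    then show ?thesis by blast
  qed
  have Ech: "chainS (E q)" for q using chA unfolding chainS_def E_def by blast
  have BE: "B q = \<Union>(E q)" for q by (simp add: B_def E_def)
  have AB: "A p \<subseteq> B q" if "p < q" for p q unfolding BE E_def using that by blast
  have BA: "B q \<subseteq> A q" for q
  proof
    fix x assume "x \<in> B q"
    then obtain p where "p < q" "x \<in> A p" unfolding B_def by blast
    then show "x \<in> A q" using mono[of p q] by auto
  qed
  have Bstrict: "B p \<subset> B q" if "p < q" for p q
  proof -
    define m where "m = (p + q) / 2"
    have "p < m" "m < q" using that by (auto simp: m_def)
    then have "A p \<subset> A m" using strict by blast
    then show ?thesis using BA[of p] AB[OF \<open>m < q\<close>] by blast
  qed
  have Bclo: "B q \<in> clo (range A)" for q
    unfolding BE by (rule Union_in_clo[OF Ech Ene]) (auto simp: E_def)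
  have "\<not> top_scattered cantor_top T" if T: "chi ` range B \<subseteq> T" for T
  proof
    assume ts: "top_scattered cantor_top T"
    have "chi ` range B \<noteq> {}" by blast
    then obtain h U where hU: "h \<in> chi ` range B" "openin cantor_top U" "U \<inter> chi ` range B = {h}"
      using ts T unfolding top_scattered_def by meson
    then obtain q where hq: "h = chi (B q)" by blast
    have "h \<in> U" using hU(3) by blast
    then have "chi (B q) \<in> U" using hq by simp
    then obtain F G where FG: "finite F" "finite G" "chi (B q) \<in> nbhd F G" "nbhd F G \<subseteq> U"
      using openin_nbhd_sub[OF hU(2)] by blast
    have FB: "F \<subseteq> \<Union>(E q)" "G \<inter> B q = {}" using FG(3) unfolding chi_in_nbhd BE by blast+
    obtain C where C: "C \<in> E q" "F \<subseteq> C" using chain_finite_upper[OF Ech Ene FG(1) FB(1)] by blast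
    then obtain p where p: "p < q" "C = A p" unfolding E_def by blast
    define m where "m = (p + q) / 2"
    have pm: "p < m" "m < q" using p(1) by (auto simp: m_def)
    have "F \<subseteq> B m" using C(2) p(2) AB[OF pm(1)] by blast
    moreover have "G \<inter> B m = {}" using FB(2) Bstrict[OF pm(2)] by blast
    ultimately have "chi (B m) \<in> U" using FG(4) chi_in_nbhd by blast
    then have "chi (B m) \<in> U \<inter> chi ` range B" by blast
    then have "chi (B m) = chi (B q)" using hU(3) hq by blast
    then have "B m = B q" by (simp add: chi_inj)
    then show False using Bstrict[OF pm(2)] by simp
  qed
  then show ?thesis using Bclo by blast
qed

lemma Id_down: "I \<in> Id \<Longrightarrow> x \<in> I \<Longrightarrow> y \<le> x \<Longrightarrow> y \<in> I"
  unfolding Id_def by blast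

lemma Id_ne: "I \<in> Id \<Longrightarrow> I \<noteq> {}"
  unfolding Id_def by blast

lemma Id_dir: "I \<in> Id \<Longrightarrow> x \<in> I \<Longrightarrow> y \<in> I \<Longrightarrow> \<exists>z\<in>I. x \<le> z \<and> y \<le> z"
  by (simp add: Id_def)

lemma Id_sup: "I \<in> Id \<Longrightarrow> x \<in> I \<Longrightarrow> y \<in> I \<Longrightarrow> sup x y \<in> I"
  by (meson Id_dir Id_down le_sup_iff)

lemma Id_sup_iff: "I \<in> Id \<Longrightarrow> sup x y \<in> I \<longleftrightarrow> x \<in> I \<and> y \<in> I"
  by (meson Id_down Id_sup sup_ge1 sup_ge2)

lemma IdI:
  assumes "I \<noteq> {}" "\<And>x y. x \<in> I \<Longrightarrow> y \<le> x \<Longrightarrow> y \<in> I" "\<And>x y. x \<in> I \<Longrightarrow> y \<in> I \<Longrightarrow> sup x y \<in> I"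
  shows "I \<in> Id"
  unfolding Id_def using assms by (auto intro: sup_ge1 sup_ge2)

lemma Union_chain_Id:
  assumes "chainS CC" "CC \<noteq> {}" "CC \<subseteq> Id" shows "\<Union>CC \<in> Id"
proof (rule IdI)
  show "\<Union>CC \<noteq> {}" using assms(2,3) Id_ne by blast
  show "y \<in> \<Union>CC" if "x \<in> \<Union>CC" "y \<le> x" for x y using that assms(3) Id_down by blast
  show "sup x y \<in> \<Union>CC" if xy: "x \<in> \<Union>CC" "y \<in> \<Union>CC" for x y
  proof -
    obtain J1 J2 where J: "J1 \<in> CC" "x \<in> J1" "J2 \<in> CC" "y \<in> J2" using xy by blast
    have "J1 \<subseteq> J2 \<or> J2 \<subseteq> J1" using assms(1) J unfolding chainS_def by blast
    then show ?thesis using J assms(3) Id_sup by blast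
  qed
qed

lemma down_Id: "{z. z \<le> y} \<in> Id"
  by (rule IdI) auto

lemma mi_sub_Id: "mi_Delta Id \<subseteq> Id"
  unfolding mi_Delta_def by blast

lemma exists_mi:
  assumes I: "I \<in> Id" and x: "x \<notin> I"
  shows "\<exists>m\<in>mi_Delta Id. I \<subseteq> m \<and> x \<notin> m"
proof -
  define FF where "FF = {J\<in>Id. I \<subseteq> J \<and> x \<notin> J}"
  have "\<exists>M\<in>FF. \<forall>X\<in>FF. M \<subseteq> X \<longrightarrow> X = M"
  proof (rule subset_Zorn_nonempty)
    show "FF \<noteq> {}" using I x by (auto simp: FF_def)
    fix CC assume CC: "CC \<noteq> {}" "subset.chain FF CC"
    have ch: "chainS CC" "CC \<subseteq> Id" using CC(2) unfolding subset.chain_def chainS_def FF_def by blast+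
    have "\<Union>CC \<in> Id" using Union_chain_Id[OF ch(1) CC(1) ch(2)] .
    moreover have "I \<subseteq> \<Union>CC" using CC unfolding subset.chain_def FF_def by blast
    moreover have "x \<notin> \<Union>CC" using CC(2) unfolding subset.chain_def FF_def by blast
    ultimately show "\<Union>CC \<in> FF" by (simp add: FF_def)
  qed
  then obtain m where m: "m \<in> FF" "\<forall>X\<in>FF. m \<subseteq> X \<longrightarrow> X = m" by blast
  have mId: "m \<in> Id" "I \<subseteq> m" "x \<notin> m" using m(1) by (auto simp: FF_def)
  define m' where "m' = {y. \<exists>j\<in>m. y \<le> sup j x}"
  have m'Id: "m' \<in> Id"
  proof (rule IdI)
    obtain j where "j \<in> m" using Id_ne[OF mId(1)] by blast
    then show "m' \<noteq> {}" unfolding m'_def by blast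
    show "y \<in> m'" if yz: "z \<in> m'" "y \<le> z" for y z
    proof -
      obtain j where "j \<in> m" "z \<le> sup j x" using yz(1) unfolding m'_def by blast
      then show ?thesis using yz(2) unfolding m'_def using order_trans by blast
    qed
    show "sup y1 y2 \<in> m'" if yy: "y1 \<in> m'" "y2 \<in> m'" for y1 y2
    proof -
      obtain j1 j2 where j: "j1 \<in> m" "y1 \<le> sup j1 x" "j2 \<in> m" "y2 \<le> sup j2 x"
        using yy unfolding m'_def by blast
      have "sup j1 j2 \<in> m" using Id_sup[OF mId(1) j(1) j(3)] .
      moreover have "sup y1 y2 \<le> sup (sup j1 j2) x"
        using j(2,4) by (meson le_sup_iff sup_ge1 sup_ge2 order_trans)
      ultimately show ?thesis unfolding m'_def by blast
    qed
  qed
  have mm': "m \<subset> m'"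
  proof -
    have "m \<subseteq> m'" unfolding m'_def using sup_ge1 by blast
    moreover obtain j where "j \<in> m" using Id_ne[OF mId(1)] by blast
    then have "x \<in> m'" unfolding m'_def using sup_ge2 by blast
    ultimately show ?thesis using mId(3) by blast
  qed
  have cover: "m' \<subseteq> z" if z: "z \<in> Id" "m \<subset> z" for z
  proof -
    have "x \<in> z"
    proof (rule ccontr)
      assume "x \<notin> z"
      then have "z \<in> FF" using z mId(2) by (auto simp: FF_def)
      then have "z = m" using m(2) z(2) by blast
      then show False using z(2) by simp
    qed
    show ?thesis
    proof
      fix y assume "y \<in> m'"
      then obtain j where j: "j \<in> m" "y \<le> sup j x" unfolding m'_def by blast
      have "j \<in> z" using j(1) z(2) by blast
      then have "sup j x \<in> z" using Id_sup[OF z(1)] \<open>x \<in> z\<close> by blast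
      then show "y \<in> z" using Id_down[OF z(1)] j(2) by blast
    qed
  qed
  have "m \<in> mi_Delta Id" unfolding mi_Delta_def using mId(1) m'Id mm' cover by blast
  then show ?thesis using mId by blast
qed



locale jemb =
  fixes k :: nat and C :: "nat \<Rightarrow> 'c set" and le :: "nat \<Rightarrow> 'c \<Rightarrow> 'c \<Rightarrow> bool"
    and f :: "'a::semilattice_sup \<Rightarrow> nat \<Rightarrow> 'c"
  assumes je: "join_embedding k C le f"
begin

lemma inC: "i < k \<Longrightarrow> f x i \<in> C i"
  using je unfolding join_embedding_def by blast

lemma chC: "i < k \<Longrightarrow> is_chain (C i) (le i)"
  using je unfolding join_embedding_def by blast

lemma lrefl: "i < k \<Longrightarrow> le i (f x i) (f x i)"
  using chC inC unfolding is_chain_def by blast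

lemma lantisym: "i < k \<Longrightarrow> le i (f x i) (f y i) \<Longrightarrow> le i (f y i) (f x i) \<Longrightarrow> f x i = f y i"
  using chC[of i] inC[of i x] inC[of i y] unfolding is_chain_def by blast

lemma ltrans: "i < k \<Longrightarrow> le i (f x i) (f y i) \<Longrightarrow> le i (f y i) (f z i) \<Longrightarrow> le i (f x i) (f z i)"
  using chC[of i] inC[of i x] inC[of i y] inC[of i z] unfolding is_chain_def by blast

lemma ltotal: "i < k \<Longrightarrow> le i (f x i) (f y i) \<or> le i (f y i) (f x i)"
  using chC[of i] inC[of i x] inC[of i y] unfolding is_chain_def by blast

lemma joinf: "i < k \<Longrightarrow> f (sup x y) i = (if le i (f x i) (f y i) then f y i else f x i)"
  using je unfolding join_embedding_def by blast

lemma injf: "(\<forall>i<k. f x i = f y i) \<Longrightarrow> x = y"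
  using je unfolding join_embedding_def by blast

lemma fmono: "x \<le> y \<Longrightarrow> i < k \<Longrightarrow> le i (f x i) (f y i)"
  using joinf[of i x y] lrefl[of i x] by (metis sup.absorb2)

lemma lefl: "(\<forall>i<k. le i (f x i) (f y i)) \<Longrightarrow> x \<le> y"
proof -
  assume h: "\<forall>i<k. le i (f x i) (f y i)"
  have "\<forall>i<k. f (sup x y) i = f y i" using h joinf by simp
  then have "sup x y = y" using injf by blast
  then show "x \<le> y" by (metis sup_ge1)
qed

definition W :: "nat \<Rightarrow> 'a \<Rightarrow> 'a set" where
  "W i x = {z. le i (f z i) (f x i) \<and> f z i \<noteq> f x i}"

lemma W_down: "i < k \<Longrightarrow> z \<in> W i x \<Longrightarrow> z' \<le> z \<Longrightarrow> z' \<in> W i x"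
proof -
  assume i: "i < k" and z: "z \<in> W i x" and z': "z' \<le> z"
  have a: "le i (f z' i) (f z i)" using fmono[OF z' i] .
  have b: "le i (f z i) (f x i)" "f z i \<noteq> f x i" using z by (auto simp: W_def)
  have "le i (f z' i) (f x i)" using ltrans[OF i a b(1)] .
  moreover have "f z' i \<noteq> f x i"
  proof
    assume "f z' i = f x i"
    then have "le i (f x i) (f z i)" using a by simp
    then show False using lantisym[OF i b(1)] b(2) by simp
  qed
  ultimately show ?thesis by (simp add: W_def)
qed

lemma W_sup: "i < k \<Longrightarrow> z \<in> W i x \<Longrightarrow> z' \<in> W i x \<Longrightarrow> sup z z' \<in> W i x"
  using joinf[of i z z'] by (simp add: W_def)

lemma W_Id: "i < k \<Longrightarrow> W i x \<noteq> {} \<Longrightarrow> W i x \<in> Id"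
  by (rule IdI) (auto intro: W_down W_sup)

lemma W_mono: "i < k \<Longrightarrow> le i (f x i) (f y i) \<Longrightarrow> W i x \<subseteq> W i y"
proof
  fix z assume i: "i < k" and xy: "le i (f x i) (f y i)" and z: "z \<in> W i x"
  have b: "le i (f z i) (f x i)" "f z i \<noteq> f x i" using z by (auto simp: W_def)
  have "le i (f z i) (f y i)" using ltrans[OF i b(1) xy] .
  moreover have "f z i \<noteq> f y i"
  proof
    assume "f z i = f y i"
    then have "le i (f x i) (f z i)" using xy by simp
    then show False using lantisym[OF i b(1)] b(2) by simp
  qed
  ultimately show "z \<in> W i y" by (simp add: W_def)
qed

lemma W_chain: "i < k \<Longrightarrow> chainS (range (W i))"
  unfolding chainS_def using W_mono ltotal by blast

lemma W_strict: "i < k \<Longrightarrow> W i x \<subset> W i y \<Longrightarrow> le i (f x i) (f y i) \<and> f x i \<noteq> f y i"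
proof -
  assume i: "i < k" and s: "W i x \<subset> W i y"
  have "le i (f x i) (f y i)"
  proof (rule ccontr)
    assume "\<not> le i (f x i) (f y i)"
    then have "le i (f y i) (f x i)" using ltotal[OF i] by blast
    then show False using W_mono[OF i] s by blast
  qed
  moreover have "f x i \<noteq> f y i"
  proof
    assume e: "f x i = f y i"
    have "W i x = W i y" unfolding W_def e ..
    then show False using s by simp
  qed
  ultimately show ?thesis by blast
qed

lemma W_sep:
  assumes I: "I \<in> Id" and x: "x \<notin> I"
  shows "\<exists>i<k. I \<subseteq> W i x"
proof (rule ccontr)
  assume "\<not> (\<exists>i<k. I \<subseteq> W i x)"
  then have h: "\<forall>i<k. \<exists>y\<in>I. y \<notin> W i x" by blast
  have "j \<le> k \<Longrightarrow> \<exists>y\<in>I. \<forall>i<j. y \<notin> W i x" for j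
  proof (induction j)
    case 0 then show ?case using Id_ne[OF I] by blast
  next
    case (Suc j)
    then obtain y where y: "y \<in> I" "\<forall>i<j. y \<notin> W i x" by force
    have "j < k" using Suc.prems by simp
    then have "\<exists>y\<in>I. y \<notin> W j x" using h by blast
    then obtain yj where yj: "yj \<in> I" "yj \<notin> W j x" by blast
    obtain z where z: "z \<in> I" "y \<le> z" "yj \<le> z" using Id_dir[OF I y(1) yj(1)] by blast
    have "\<forall>i<Suc j. z \<notin> W i x"
    proof (intro allI impI)
      fix i assume "i < Suc j"
      then have ik: "i < k" using Suc.prems by simp
      show "z \<notin> W i x"
      proof
        assume "z \<in> W i x"
        then have "y \<in> W i x" "yj \<in> W i x" using W_down[OF ik] z by blast+
        then show False using y(2) yj(2) \<open>i < Suc j\<close> less_Suc_eq by blast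
      qed
    qed
    then show ?case using z(1) by blast
  qed
  then obtain y where y: "y \<in> I" "\<forall>i<k. y \<notin> W i x" by blast
  have "\<forall>i<k. le i (f x i) (f y i)"
  proof (intro allI impI)
    fix i assume i: "i < k"
    show "le i (f x i) (f y i)"
    proof (cases "f y i = f x i")
      case True then show ?thesis using lrefl[OF i, of x] by simp
    next
      case False
      then have "\<not> le i (f y i) (f x i)" using y(2) i by (auto simp: W_def)
      then show ?thesis using ltotal[OF i] by blast
    qed
  qed
  then have "x \<le> y" using lefl by blast
  then show False using Id_down[OF I y(1)] x by blast
qed

lemma W_os:
  assumes i: "i < k" and os: "order_scattered (C i) (le i)"
  shows "order_scattered (range (W i)) (\<subseteq>)"
  unfolding os_strict_iff
proof
  assume "\<exists>g::rat \<Rightarrow> _. range g \<subseteq> range (W i) \<and> (\<forall>p q. p < q \<longrightarrow> g p \<subset> g q)"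
  then obtain g :: "rat \<Rightarrow> 'a set" where g: "range g \<subseteq> range (W i)" "\<forall>p q. p < q \<longrightarrow> g p \<subset> g q" by blast
  define xq where "xq q = (SOME x. g q = W i x)" for q
  have xq: "g q = W i (xq q)" for q
  proof -
    have "\<exists>x. g q = W i x" using g(1) by blast
    then show ?thesis unfolding xq_def by (rule someI_ex)
  qed
  define h where "h q = f (xq q) i" for q
  have hC: "range h \<subseteq> C i" using inC[OF i] by (auto simp: h_def)
  have hs: "le i (h p) (h q) \<and> h p \<noteq> h q" if "p < q" for p q
    using W_strict[OF i] g(2) that xq by (simp add: h_def)
  have "p \<le> q \<longleftrightarrow> le i (h p) (h q)" for p q
  proof
    assume "p \<le> q"
    then show "le i (h p) (h q)"
      using hs[of p q] lrefl[OF i, of "xq p"] by (cases "p = q") (auto simp: h_def)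
  next
    assume a: "le i (h p) (h q)"
    show "p \<le> q"
    proof (rule ccontr)
      assume "\<not> p \<le> q"
      then have "q < p" by simp
      then have "le i (h q) (h p)" "h q \<noteq> h p" using hs by blast+
      then show False using lantisym[OF i] a by (simp add: h_def)
    qed
  qed
  then show False using os hC unfolding order_scattered_def by blast
qed

lemma mi_W:
  assumes m: "m \<in> mi_Delta Id" shows "\<exists>i<k. m \<in> range (W i)"
proof -
  obtain m' where m': "m \<in> Id" "m' \<in> Id" "m \<subset> m'" "\<forall>z\<in>Id. m \<subset> z \<longrightarrow> m' \<subseteq> z"
    using m unfolding mi_Delta_def by blast
  obtain x where x: "x \<in> m'" "x \<notin> m" using m'(3) by blast
  obtain i where i: "i < k" "m \<subseteq> W i x" using W_sep[OF m'(1) x(2)] by blast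
  have "W i x \<noteq> {}" using i(2) Id_ne[OF m'(1)] by blast
  then have WId: "W i x \<in> Id" using W_Id[OF i(1)] by blast
  have "x \<notin> W i x" by (simp add: W_def)
  have "m = W i x"
  proof (rule ccontr)
    assume "m \<noteq> W i x"
    then have "m \<subset> W i x" using i(2) by blast
    then have "m' \<subseteq> W i x" using m'(4) WId by blast
    then show False using x(1) \<open>x \<notin> W i x\<close> by blast
  qed
  then show ?thesis using i(1) by blast
qed

lemma Id_repr:
  assumes I: "I \<in> Id"
  shows "I \<in> {(\<Inter>i<k. c i) | c. \<forall>i<k. c i \<in> clo (insert UNIV (range (W i)))}"
proof -
  define c where "c i = \<Inter>{B \<in> insert UNIV (range (W i)). I \<subseteq> B}" for i
  have "c i \<in> clo (insert UNIV (range (W i)))" if i: "i < k" for i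
  proof -
    have ch: "chainS {B \<in> insert UNIV (range (W i)). I \<subseteq> B}"
      using W_chain[OF i] unfolding chainS_def by blast
    show ?thesis unfolding c_def by (rule Inter_in_clo[OF ch]) auto
  qed
  moreover have "I = (\<Inter>i<k. c i)"
  proof
    show "I \<subseteq> (\<Inter>i<k. c i)" unfolding c_def by blast
    show "(\<Inter>i<k. c i) \<subseteq> I"
    proof
      fix x assume x: "x \<in> (\<Inter>i<k. c i)"
      show "x \<in> I"
      proof (rule ccontr)
        assume "x \<notin> I"
        then obtain i where i: "i < k" "I \<subseteq> W i x" using W_sep[OF I] by blast
        then have "c i \<subseteq> W i x" unfolding c_def by blast
        then show False using x i(1) by (auto simp: W_def)
      qed
    qed
  qed
  ultimately show ?thesis by blast
qed

end



context jemb
begin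

lemma om_embed:
  assumes osM: "order_scattered (mi_Delta (Id :: 'a set set)) (\<subseteq>)"
  shows "embeds_in_scattered_chains TYPE('a) k"
proof -
  define Ci where "Ci i = mi_Delta Id \<inter> range (W i)" for i
  have cover: "\<exists>i<k. m \<in> Ci i" if "m \<in> mi_Delta Id" for m
    using mi_W[OF that] that by (auto simp: Ci_def)
  have CiId: "Ci i \<subseteq> Id" for i using mi_sub_Id by (auto simp: Ci_def)
  have chCi: "chainS (Ci i)" if "i < k" for i
    using W_chain[OF that] unfolding chainS_def Ci_def by blast
  define v where "v i x = \<Union>{m \<in> Ci i. x \<notin> m}" for i x
  have v_sup: "v i (sup x y) = v i x \<union> v i y" for i x y
  proof -
    have "{m \<in> Ci i. sup x y \<notin> m} = {m \<in> Ci i. x \<notin> m} \<union> {m \<in> Ci i. y \<notin> m}"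
      using CiId Id_sup_iff by blast
    then show ?thesis unfolding v_def by blast
  qed
  have v_cmp: "v i x \<subseteq> v i y \<or> v i y \<subseteq> v i x" if i: "i < k" for i x y
  proof -
    have "{m \<in> Ci i. x \<notin> m} \<subseteq> {m \<in> Ci i. y \<notin> m} \<or> {m \<in> Ci i. y \<notin> m} \<subseteq> {m \<in> Ci i. x \<notin> m}"
    proof (rule ccontr)
      assume "\<not> ?thesis"
      then obtain m1 m2 where m: "m1 \<in> Ci i" "x \<notin> m1" "y \<in> m1" "m2 \<in> Ci i" "y \<notin> m2" "x \<in> m2" by blast
      have "m1 \<subseteq> m2 \<or> m2 \<subseteq> m1" using chCi[OF i] m(1,4) unfolding chainS_def by blast
      then show False using m by blast
    qed
    then show ?thesis unfolding v_def by blast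
  qed
  have v_sep1: "\<exists>i<k. v i x \<noteq> v i y" if nxy: "\<not> x \<le> y" for x y
  proof -
    have "x \<notin> {z. z \<le> y}" using nxy by simp
    then obtain m where m: "m \<in> mi_Delta Id" "{z. z \<le> y} \<subseteq> m" "x \<notin> m"
      using exists_mi[OF down_Id] by blast
    obtain i where i: "i < k" "m \<in> Ci i" using cover[OF m(1)] by blast
    have ym: "y \<in> m" using m(2) by blast
    have "m \<subseteq> v i x" using i(2) m(3) unfolding v_def by blast
    moreover have "\<not> m \<subseteq> v i y"
    proof
      assume "m \<subseteq> v i y"
      then have "y \<in> v i y" using ym by blast
      then show False unfolding v_def by blast
    qed
    ultimately show ?thesis using i(1) by blast
  qed
  have v_sep: "\<exists>i<k. v i x \<noteq> v i y" if "x \<noteq> y" for x y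
  proof (cases "x \<le> y")
    case True
    then have "\<not> y \<le> x" using that by simp
    then show ?thesis using v_sep1 by metis
  next
    case False then show ?thesis using v_sep1 by blast
  qed
  have v_os: "order_scattered (range (v i)) (\<subseteq>)" if i: "i < k" for i
  proof -
    have ch: "chainS (insert {} (Ci i))" using chCi[OF i] unfolding chainS_def by blast
    have os: "order_scattered (insert {} (Ci i)) (\<subseteq>)"
      using os_insert[OF os_subset[OF osM]] by (simp add: Ci_def)
    have "range (v i) \<subseteq> clo (insert {} (Ci i))"
    proof
      fix A assume "A \<in> range (v i)"
      then obtain x where A: "A = v i x" by blast
      show "A \<in> clo (insert {} (Ci i))"
      proof (cases "{m \<in> Ci i. x \<notin> m} = {}")
        case True
        then have "A = {}" unfolding A v_def by (metis Union_empty)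
        then show ?thesis using subset_clo by blast
      next
        case False
        have chU: "chainS {m \<in> Ci i. x \<notin> m}" using chCi[OF i] unfolding chainS_def by blast
        show ?thesis unfolding A v_def by (rule Union_in_clo[OF chU False]) blast
      qed
    qed
    then show ?thesis using os_subset[OF os_clo[OF ch os]] by blast
  qed
  define rep where "rep i x = (SOME y. v i y = v i x)" for i x
  have rep_v: "v i (rep i x) = v i x" for i x
    unfolding rep_def by (rule someI_ex) blast
  have rep_eq: "v i x = v i y \<Longrightarrow> rep i x = rep i y" for i x y
    unfolding rep_def by simp
  define C2 where "C2 i = range (rep i)" for i
  define le2 where "le2 i a b = (v i a \<subseteq> v i b)" for i a b
  define f2 where "f2 x i = rep i x" for x i
  have jeb: "join_embedding k C2 le2 f2"
    unfolding join_embedding_def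
  proof (intro conjI allI impI)
    fix i assume i: "i < k"
    show "is_chain (C2 i) (le2 i)"
      unfolding is_chain_def
    proof (intro conjI ballI impI)
      fix a b assume ab: "a \<in> C2 i" "b \<in> C2 i" "le2 i a b \<and> le2 i b a"
      obtain x where x: "a = rep i x" using ab(1) unfolding C2_def by blast
      obtain y where y: "b = rep i y" using ab(2) unfolding C2_def by blast
      note xy = x y
      have "v i a = v i b" using ab(3) by (auto simp: le2_def)
      moreover have e1: "v i a = v i x" unfolding x by (rule rep_v)
      moreover have e2: "v i b = v i y" unfolding y by (rule rep_v)
      ultimately have "v i x = v i y" by simp
      then show "a = b" unfolding x y by (rule rep_eq)
    next
      fix a b assume ab: "a \<in> C2 i" "b \<in> C2 i"
      obtain x where x: "a = rep i x" using ab(1) unfolding C2_def by blast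
      obtain y where y: "b = rep i y" using ab(2) unfolding C2_def by blast
      note xy = x y
      have e1: "v i a = v i x" unfolding x by (rule rep_v)
      have e2: "v i b = v i y" unfolding y by (rule rep_v)
      show "le2 i a b \<or> le2 i b a" using v_cmp[OF i, of x y] unfolding le2_def e1 e2 .
    qed (auto simp: le2_def)
  next
    fix x i assume "i < k"
    show "f2 x i \<in> C2 i" by (simp add: f2_def C2_def)
  next
    fix x y i assume i: "i < k"
    show "f2 (sup x y) i = (if le2 i (f2 x i) (f2 y i) then f2 y i else f2 x i)"
    proof (cases "v i x \<subseteq> v i y")
      case True
      then have "v i (sup x y) = v i y" using v_sup by blast
      then have "rep i (sup x y) = rep i y" by (rule rep_eq)
      moreover have "le2 i (f2 x i) (f2 y i)" using True by (simp add: le2_def f2_def rep_v)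
      ultimately show ?thesis by (simp add: f2_def)
    next
      case False
      then have "v i y \<subseteq> v i x" using v_cmp[OF i] by blast
      then have "v i (sup x y) = v i x" using v_sup by blast
      then have "rep i (sup x y) = rep i x" by (rule rep_eq)
      moreover have "\<not> le2 i (f2 x i) (f2 y i)" using False by (simp add: le2_def f2_def rep_v)
      ultimately show ?thesis by (simp add: f2_def)
    qed
  next
    fix x y assume h: "\<forall>i<k. f2 x i = f2 y i"
    show "x = y"
    proof (rule ccontr)
      assume "x \<noteq> y"
      then obtain i where i: "i < k" "v i x \<noteq> v i y" using v_sep by blast
      have "rep i x = rep i y" using h i(1) by (simp add: f2_def)
      then have "v i (rep i x) = v i (rep i y)" by simp
      then show False using i(2) rep_v by simp
    qed
  qed
  have osC2: "order_scattered (C2 i) (le2 i)" if i: "i < k" for i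
    unfolding order_scattered_def
  proof
    assume "\<exists>g::rat \<Rightarrow> 'a. range g \<subseteq> C2 i \<and> (\<forall>p q. (p \<le> q) = le2 i (g p) (g q))"
    then obtain g :: "rat \<Rightarrow> 'a" where g: "range g \<subseteq> C2 i" "\<forall>p q. (p \<le> q) = le2 i (g p) (g q)" by blast
    define h where "h q = v i (g q)" for q
    have "range h \<subseteq> range (v i)" by (auto simp: h_def)
    moreover have "\<forall>p q. (p \<le> q) = (h p \<subseteq> h q)" using g(2) by (simp add: h_def le2_def)
    ultimately show False using v_os[OF i] unfolding order_scattered_def by blast
  qed
  show ?thesis
    unfolding embeds_in_scattered_chains_def using jeb osC2 by blast
qed

end



lemma E_imp_T:
  assumes "embeds_in_scattered_chains TYPE('a::semilattice_sup) k"
  shows "top_scattered cantor_top (chi ` (Id :: 'a set set))"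
proof -
  obtain C :: "nat \<Rightarrow> 'a set" and le and f :: "'a \<Rightarrow> nat \<Rightarrow> 'a"
    where je: "join_embedding k C le f" and os: "\<forall>i<k. order_scattered (C i) (le i)"
    using assms unfolding embeds_in_scattered_chains_def by blast
  interpret J: jemb k C le f by (rule jemb.intro[OF je])
  have "\<forall>i<k. chainS (range (J.W i)) \<and> order_scattered (range (J.W i)) (\<subseteq>)"
    using J.W_chain J.W_os os by blast
  then have ts: "top_scattered cantor_top (chi ` {(\<Inter>i<k. c i) | c. \<forall>i<k. c i \<in> clo (insert UNIV (range (J.W i)))})"
    by (rule families_scattered)
  have "(Id :: 'a set set) \<subseteq> {(\<Inter>i<k. c i) | c. \<forall>i<k. c i \<in> clo (insert UNIV (range (J.W i)))}"
    using J.Id_repr by blast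
  then have "chi ` (Id :: 'a set set) \<subseteq> chi ` {(\<Inter>i<k. c i) | c. \<forall>i<k. c i \<in> clo (insert UNIV (range (J.W i)))}"
    by (rule image_mono)
  then show ?thesis by (rule ts_subset[OF ts])
qed

lemma strict_chain:
  fixes g :: "rat \<Rightarrow> 'b set"
  assumes g: "\<forall>p q. p < q \<longrightarrow> g p \<subset> g q" shows "chainS (range g)"
  unfolding chainS_def
proof (intro ballI)
  fix X Y assume "X \<in> range g" "Y \<in> range g"
  then obtain p q where pq: "X = g p" "Y = g q" by blast
  consider "p < q" | "p = q" | "q < p" using linorder_less_linear by blast
  then show "X \<subseteq> Y \<or> Y \<subseteq> X"
  proof cases
    case 1 then show ?thesis using g pq by blast
  next
    case 2 then show ?thesis using pq by simp
  next
    case 3 then show ?thesis using g pq by blast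
  qed
qed

lemma T_imp_O:
  assumes T: "top_scattered cantor_top (chi ` (Id :: 'a::semilattice_sup set set))"
  shows "order_scattered (Id :: 'a set set) (\<subseteq>)"
  unfolding os_strict_iff
proof
  assume "\<exists>g::rat \<Rightarrow> 'a set. range g \<subseteq> (Id :: 'a set set) \<and> (\<forall>p q. p < q \<longrightarrow> g p \<subset> g q)"
  then obtain g :: "rat \<Rightarrow> 'a set" where g: "range g \<subseteq> Id" "\<forall>p q. p < q \<longrightarrow> g p \<subset> g q" by blast
  define B where "B = (\<lambda>q. \<Union>{g p | p. p < q})"
  have Q: "\<forall>T. chi ` range B \<subseteq> T \<longrightarrow> \<not> top_scattered cantor_top T"
    using conjunct2[OF Q_lemma[OF g(2)]] unfolding B_def .
  have "B q \<in> Id" for q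
  proof -
    have ch: "chainS {g p | p. p < q}"
      using strict_chain[OF g(2)] unfolding chainS_def by blast
    have ne: "{g p | p. p < q} \<noteq> {}"
    proof -
      have "g (q - 1) \<in> {g p | p. p < q}" by (intro CollectI exI[of _ "q - 1"]) simp
      then show ?thesis by blast
    qed
    have "{g p | p. p < q} \<subseteq> Id" using g(1) by blast
    then show ?thesis unfolding B_def by (rule Union_chain_Id[OF ch ne])
  qed
  then have "chi ` range B \<subseteq> chi ` Id" by blast
  then show False using Q T by blast
qed

lemma Tc_imp_Om:
  assumes T: "top_scattered cantor_top (cantor_top closure_of (chi ` mi_Delta (Id :: 'a::semilattice_sup set set)))"
  shows "order_scattered (mi_Delta (Id :: 'a set set)) (\<subseteq>)"
  unfolding os_strict_iff
proof
  assume "\<exists>g::rat \<Rightarrow> 'a set. range g \<subseteq> mi_Delta (Id :: 'a set set) \<and> (\<forall>p q. p < q \<longrightarrow> g p \<subset> g q)"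
  then obtain g :: "rat \<Rightarrow> 'a set" where g: "range g \<subseteq> mi_Delta Id" "\<forall>p q. p < q \<longrightarrow> g p \<subset> g q" by blast
  define B where "B = (\<lambda>q. \<Union>{g p | p. p < q})"
  have Q: "\<forall>q. B q \<in> clo (range g)" "\<forall>T. chi ` range B \<subseteq> T \<longrightarrow> \<not> top_scattered cantor_top T"
    using conjunct1[OF Q_lemma[OF g(2)]] conjunct2[OF Q_lemma[OF g(2)]] unfolding B_def by auto
  have "range B \<subseteq> clo (mi_Delta Id)" using Q(1) clo_mono[OF g(1)] by blast
  then have "chi ` range B \<subseteq> cantor_top closure_of (chi ` mi_Delta Id)"
    unfolding closure_chi by (rule image_mono)
  then show False using Q(2) T by blast
qed

theorem theorem9p4:
  fixes n :: nat
  assumes "join_dim_eq TYPE('a::semilattice_sup) n"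
  shows "(embeds_in_scattered_chains TYPE('a) n
          \<longleftrightarrow> (\<exists>k. embeds_in_scattered_chains TYPE('a) k))
       \<and> ((\<exists>k. embeds_in_scattered_chains TYPE('a) k)
          \<longleftrightarrow> top_scattered cantor_top (chi ` (Id :: 'a set set)))
       \<and> (top_scattered cantor_top (chi ` (Id :: 'a set set))
          \<longleftrightarrow> order_scattered (Id :: 'a set set) (\<subseteq>))
       \<and> (order_scattered (Id :: 'a set set) (\<subseteq>)
          \<longleftrightarrow> order_scattered (mi_Delta (Id :: 'a set set)) (\<subseteq>))
       \<and> (order_scattered (mi_Delta (Id :: 'a set set)) (\<subseteq>)
          \<longleftrightarrow> top_scattered cantor_top (cantor_top closure_of (chi ` mi_Delta (Id :: 'a set set))))"
proof -
  obtain C :: "nat \<Rightarrow> 'a set" and le and f :: "'a \<Rightarrow> nat \<Rightarrow> 'a"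
    where je: "join_embedding n C le f"
    using assms unfolding join_dim_eq_def embeds_in_chains_def by blast
  interpret J: jemb n C le f by (rule jemb.intro[OF je])
  define En where "En = embeds_in_scattered_chains TYPE('a) n"
  define E where "E = (\<exists>k. embeds_in_scattered_chains TYPE('a) k)"
  define T where "T = top_scattered cantor_top (chi ` (Id :: 'a set set))"
  define Os where "Os = order_scattered (Id :: 'a set set) (\<subseteq>)"
  define Om where "Om = order_scattered (mi_Delta (Id :: 'a set set)) (\<subseteq>)"
  define Tc where "Tc = top_scattered cantor_top (cantor_top closure_of (chi ` mi_Delta (Id :: 'a set set)))"
  have 1: "En \<longrightarrow> E" unfolding En_def E_def by blast
  have 2: "E \<longrightarrow> T" unfolding E_def T_def using E_imp_T by blast
  have 3: "T \<longrightarrow> Os" unfolding T_def Os_def using T_imp_O by blast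
  have 4: "Os \<longrightarrow> Om" unfolding Os_def Om_def using os_subset[OF _ mi_sub_Id] by blast
  have 5: "Om \<longrightarrow> En" unfolding Om_def En_def using J.om_embed by blast
  have 7: "Tc \<longrightarrow> Om" unfolding Tc_def Om_def using Tc_imp_Om by blast
  have 6: "Om \<longrightarrow> Tc"
  proof
    assume osM: Om
    define Ci where "Ci i = mi_Delta (Id :: 'a set set) \<inter> range (J.W i)" for i
    have Mcov: "mi_Delta (Id :: 'a set set) = (\<Union>i\<in>{..<n}. Ci i)"
    proof
      show "mi_Delta (Id :: 'a set set) \<subseteq> (\<Union>i\<in>{..<n}. Ci i)"
      proof
        fix m assume m: "m \<in> mi_Delta (Id :: 'a set set)"
        then obtain i where "i < n" "m \<in> range (J.W i)" using J.mi_W by blast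
        then show "m \<in> (\<Union>i\<in>{..<n}. Ci i)" using m by (auto simp: Ci_def)
      qed
    qed (auto simp: Ci_def)
    have hyp: "\<forall>i<n. chainS (Ci i) \<and> order_scattered (Ci i) (\<subseteq>)"
    proof (intro allI impI conjI)
      fix i assume i: "i < n"
      show "chainS (Ci i)" using J.W_chain[OF i] unfolding chainS_def Ci_def by blast
      show "order_scattered (Ci i) (\<subseteq>)" using os_subset[of "mi_Delta Id" "(\<subseteq>)" "Ci i"] osM
        unfolding Om_def Ci_def by blast
    qed
    have ts: "top_scattered cantor_top (chi ` {(\<Inter>i<n. c i) | c. \<forall>i<n. c i \<in> clo (insert UNIV (Ci i))})"
      using families_scattered[OF hyp] .
    have "chi ` mi_Delta (Id :: 'a set set) = \<Union>((\<lambda>i. chi ` Ci i) ` {..<n})"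
      unfolding Mcov by blast
    then have cl: "cantor_top closure_of (chi ` mi_Delta (Id :: 'a set set)) = (\<Union>i\<in>{..<n}. chi ` clo (Ci i))"
      by (simp add: closure_of_Union closure_chi)
    have "(\<Union>i\<in>{..<n}. chi ` clo (Ci i)) \<subseteq> chi ` {(\<Inter>i<n. c i) | c. \<forall>i<n. c i \<in> clo (insert UNIV (Ci i))}"
    proof
      fix h assume "h \<in> (\<Union>i\<in>{..<n}. chi ` clo (Ci i))"
      then obtain i A where iA: "i < n" "A \<in> clo (Ci i)" "h = chi A" by blast
      define c where "c j = (if j = i then A else UNIV)" for j
      have "\<forall>j<n. c j \<in> clo (insert UNIV (Ci j))"
      proof (intro allI impI)
        fix j assume "j < n"
        show "c j \<in> clo (insert UNIV (Ci j))"
        proof (cases "j = i")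
          case True
          then show ?thesis using iA(2) clo_mono[of "Ci i" "insert UNIV (Ci i)"] by (auto simp: c_def)
        next
          case False
          then show ?thesis using subset_clo[of "insert UNIV (Ci j)"] by (auto simp: c_def)
        qed
      qed
      moreover have "(\<Inter>j<n. c j) = A" using iA(1) by (auto simp: c_def)
      ultimately have "A \<in> {(\<Inter>i<n. c i) | c. \<forall>i<n. c i \<in> clo (insert UNIV (Ci i))}" by blast
      then show "h \<in> chi ` {(\<Inter>i<n. c i) | c. \<forall>i<n. c i \<in> clo (insert UNIV (Ci i))}"
        using iA(3) by blast
    qed
    then show Tc unfolding Tc_def cl by (rule ts_subset[OF ts])
  qed
  have "(En \<longleftrightarrow> E) \<and> (E \<longleftrightarrow> T) \<and> (T \<longleftrightarrow> Os) \<and> (Os \<longleftrightarrow> Om) \<and> (Om \<longleftrightarrow> Tc)"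
    using 1 2 3 4 5 6 7 by blast
  then show ?thesis unfolding En_def E_def T_def Os_def Om_def Tc_def .
qed


end
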